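(* Let $P$ be a finite, nonempty, ranked poset of width at most $3$. If $P$ is minimal automorphic, then $P$ is (isomorphic to) a 6-tower. Conversely, every 6-tower is automorphic.
   Context: All posets are finite. For a poset $P$ and $p\in P$, the rank $r(p)$ of $p$ is the largest $m$ such that there is a chain $p_0<p_1<\dots<p_m=p$ in $P$. The poset $P$ is ranked of rank $r(P)$ if every maximal chain of $P$ has exactly $r(P)+1$ elements. For integers $0\le i\le j$, $P(i,j)=\{p\in P: i\le r(p)\le j\}$ and $P(i)=P(i,i)$, each with the induced order. The width of $P$ is the size of its largest antichain. A subset $Q\subseteq P$ (with induced order) is a retract of $P$ if there is an order-preserving map $f:P\to Q$ with $f(q)=q$ for all $q\in Q$. The ordinal sum of posets $P_1,\dots,P_k$ ($k\ge 1$) is their disjoint union, ordered by the orders of the $P_i$ together with $p<q$ whenever $p\in P_i$, $q\in P_j$, $i<j$. The 6-crown $C_6$ is the poset on $\{x_0,x_1,x_2,y_0,y_1,y_2\}$ whose only strict comparabilities are $x_0<y_0>x_1<y_1>x_2<y_2>x_0$. A 6-stack is a ranked poset $P$ of rank $n\ge 1$ such that for each $0\le i<n$, $P(i,i+1)$ is isomorphic to $C_6$. A 6-tower is an ordinal sum of one or more posets each of which is either a two-element antichain or a 6-stack. A poset is automorphic if it has an automorphism with no fixed point; it is minimal automorphic if it is automorphic and no proper retract of it is automorphic. *)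

theory Defs
  imports Main
begin

text \<open>A finite poset is represented by a carrier set P and a relation le,
  which is a partial order on P. Subposets carry the induced order (same le).\<close>

definition poset_on :: "'a set \<Rightarrow> ('a \<Rightarrow> 'a \<Rightarrow> bool) \<Rightarrow> bool" where
  "poset_on P le \<longleftrightarrow>
     (\<forall>x\<in>P. le x x) \<and>
     (\<forall>x\<in>P. \<forall>y\<in>P. le x y \<and> le y x \<longrightarrow> x = y) \<and>
     (\<forall>x\<in>P. \<forall>y\<in>P. \<forall>z\<in>P. le x y \<and> le y z \<longrightarrow> le x z)"

definition strict :: "('a \<Rightarrow> 'a \<Rightarrow> bool) \<Rightarrow> 'a \<Rightarrow> 'a \<Rightarrow> bool" where
  "strict le x y \<longleftrightarrow> le x y \<and> x \<noteq> y"

definition rank_in :: "'a set \<Rightarrow> ('a \<Rightarrow> 'a \<Rightarrow> bool) \<Rightarrow> 'a \<Rightarrow> nat" where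
  "rank_in P le p = Max {length xs - 1 | xs. xs \<noteq> [] \<and> set xs \<subseteq> P \<and>
       sorted_wrt (strict le) xs \<and> last xs = p}"

definition chain_in :: "'a set \<Rightarrow> ('a \<Rightarrow> 'a \<Rightarrow> bool) \<Rightarrow> 'a set \<Rightarrow> bool" where
  "chain_in P le C \<longleftrightarrow> C \<subseteq> P \<and> (\<forall>x\<in>C. \<forall>y\<in>C. le x y \<or> le y x)"

definition maxchain_in :: "'a set \<Rightarrow> ('a \<Rightarrow> 'a \<Rightarrow> bool) \<Rightarrow> 'a set \<Rightarrow> bool" where
  "maxchain_in P le C \<longleftrightarrow> chain_in P le C \<and> (\<forall>D. chain_in P le D \<and> C \<subseteq> D \<longrightarrow> D = C)"

definition ranked_of_rank :: "'a set \<Rightarrow> ('a \<Rightarrow> 'a \<Rightarrow> bool) \<Rightarrow> nat \<Rightarrow> bool" where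
  "ranked_of_rank P le n \<longleftrightarrow> (\<forall>C. maxchain_in P le C \<longrightarrow> card C = n + 1)"

definition ranked :: "'a set \<Rightarrow> ('a \<Rightarrow> 'a \<Rightarrow> bool) \<Rightarrow> bool" where
  "ranked P le \<longleftrightarrow> (\<exists>n. ranked_of_rank P le n)"

definition levels :: "'a set \<Rightarrow> ('a \<Rightarrow> 'a \<Rightarrow> bool) \<Rightarrow> nat \<Rightarrow> nat \<Rightarrow> 'a set" where
  "levels P le i j = {p \<in> P. i \<le> rank_in P le p \<and> rank_in P le p \<le> j}"

definition antichain_in :: "'a set \<Rightarrow> ('a \<Rightarrow> 'a \<Rightarrow> bool) \<Rightarrow> 'a set \<Rightarrow> bool" where
  "antichain_in P le A \<longleftrightarrow> A \<subseteq> P \<and> (\<forall>x\<in>A. \<forall>y\<in>A. le x y \<longrightarrow> x = y)"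

definition width_le :: "'a set \<Rightarrow> ('a \<Rightarrow> 'a \<Rightarrow> bool) \<Rightarrow> nat \<Rightarrow> bool" where
  "width_le P le k \<longleftrightarrow> (\<forall>A. antichain_in P le A \<longrightarrow> card A \<le> k)"

text \<open>The 6-crown on {0..5}: x_i = i, y_i = 3+i (i = 0,1,2);
  x0<y0>x1<y1>x2<y2>x0, i.e. x_i < y_j iff j = i or j = i+2 mod 3.\<close>
definition C6 :: "nat set" where "C6 = {0..<6}"

definition C6_le :: "nat \<Rightarrow> nat \<Rightarrow> bool" where
  "C6_le a b \<longleftrightarrow> a = b \<or> (a < 3 \<and> 3 \<le> b \<and> (b - 3 = a \<or> b - 3 = (a + 2) mod 3))"

definition order_iso :: "'a set \<Rightarrow> ('a \<Rightarrow> 'a \<Rightarrow> bool) \<Rightarrow> 'b set \<Rightarrow> ('b \<Rightarrow> 'b \<Rightarrow> bool) \<Rightarrow> bool" where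
  "order_iso A leA B leB \<longleftrightarrow>
     (\<exists>f. bij_betw f A B \<and> (\<forall>x\<in>A. \<forall>y\<in>A. leA x y \<longleftrightarrow> leB (f x) (f y)))"

definition six_stack :: "'a set \<Rightarrow> ('a \<Rightarrow> 'a \<Rightarrow> bool) \<Rightarrow> bool" where
  "six_stack P le \<longleftrightarrow> (\<exists>n\<ge>1. ranked_of_rank P le n \<and>
      (\<forall>i<n. order_iso (levels P le i (i + 1)) le C6 C6_le))"

definition two_antichain :: "'a set \<Rightarrow> ('a \<Rightarrow> 'a \<Rightarrow> bool) \<Rightarrow> bool" where
  "two_antichain P le \<longleftrightarrow> card P = 2 \<and> antichain_in P le P"

definition six_tower :: "'a set \<Rightarrow> ('a \<Rightarrow> 'a \<Rightarrow> bool) \<Rightarrow> bool" where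
  "six_tower P le \<longleftrightarrow> (\<exists>Bs :: 'a set list. Bs \<noteq> [] \<and>
      \<Union>(set Bs) = P \<and>
      (\<forall>i<length Bs. \<forall>j<length Bs. i \<noteq> j \<longrightarrow> Bs ! i \<inter> Bs ! j = {}) \<and>
      (\<forall>i<length Bs. two_antichain (Bs ! i) le \<or> six_stack (Bs ! i) le) \<and>
      (\<forall>i<length Bs. \<forall>j<length Bs. i < j \<longrightarrow>
          (\<forall>x\<in>Bs ! i. \<forall>y\<in>Bs ! j. strict le x y)))"

definition automorphic :: "'a set \<Rightarrow> ('a \<Rightarrow> 'a \<Rightarrow> bool) \<Rightarrow> bool" where
  "automorphic P le \<longleftrightarrow> (\<exists>f. bij_betw f P P \<and>
      (\<forall>x\<in>P. \<forall>y\<in>P. le x y \<longleftrightarrow> le (f x) (f y)) \<and> (\<forall>x\<in>P. f x \<noteq> x))"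

definition retract_of :: "'a set \<Rightarrow> 'a set \<Rightarrow> ('a \<Rightarrow> 'a \<Rightarrow> bool) \<Rightarrow> bool" where
  "retract_of Q P le \<longleftrightarrow> Q \<subseteq> P \<and> (\<exists>f. f ` P \<subseteq> Q \<and>
      (\<forall>x\<in>P. \<forall>y\<in>P. le x y \<longrightarrow> le (f x) (f y)) \<and> (\<forall>q\<in>Q. f q = q))"

definition minimal_automorphic :: "'a set \<Rightarrow> ('a \<Rightarrow> 'a \<Rightarrow> bool) \<Rightarrow> bool" where
  "minimal_automorphic P le \<longleftrightarrow> automorphic P le \<and>
      (\<forall>Q. retract_of Q P le \<and> Q \<noteq> P \<longrightarrow> \<not> automorphic Q le)"

end

theory Submission
  imports Defs
begin

lemma posetD:
  assumes "poset_on P le"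
  shows "x \<in> P \<Longrightarrow> le x x"
    and "x \<in> P \<Longrightarrow> y \<in> P \<Longrightarrow> le x y \<Longrightarrow> le y x \<Longrightarrow> x = y"
    and "x \<in> P \<Longrightarrow> y \<in> P \<Longrightarrow> z \<in> P \<Longrightarrow> le x y \<Longrightarrow> le y z \<Longrightarrow> le x z"
  using assms unfolding poset_on_def by blast+

lemma sorted_wrt_strict_distinct: "sorted_wrt (strict le) xs \<Longrightarrow> distinct xs"
  by (induction xs) (auto simp: strict_def)

lemma sorted_last: "sorted_wrt R xs \<Longrightarrow> x \<in> set xs \<Longrightarrow> x = last xs \<or> R x (last xs)"
  by (induction xs) auto

lemma sorted_comp: "sorted_wrt R xs \<Longrightarrow> x \<in> set xs \<Longrightarrow> y \<in> set xs \<Longrightarrow> x = y \<or> R x y \<or> R y x"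
  by (induction xs) auto

definition monoR :: "'a set \<Rightarrow> ('a \<Rightarrow> 'a \<Rightarrow> bool) \<Rightarrow> ('a \<Rightarrow> nat) \<Rightarrow> bool" where
  "monoR P le r \<longleftrightarrow> (\<forall>x\<in>P. \<forall>y\<in>P. strict le x y \<longrightarrow> r x < r y)"

definition downR :: "'a set \<Rightarrow> ('a \<Rightarrow> 'a \<Rightarrow> bool) \<Rightarrow> ('a \<Rightarrow> nat) \<Rightarrow> bool" where
  "downR P le r \<longleftrightarrow> (\<forall>p\<in>P. 0 < r p \<longrightarrow> (\<exists>q\<in>P. strict le q p \<and> r q + 1 = r p))"

definition graded :: "'a set \<Rightarrow> ('a \<Rightarrow> 'a \<Rightarrow> bool) \<Rightarrow> ('a \<Rightarrow> nat) \<Rightarrow> nat \<Rightarrow> bool" where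
  "graded P le r n \<longleftrightarrow> (\<forall>p\<in>P. r p \<le> n) \<and> monoR P le r \<and> downR P le r \<and>
     (\<forall>p\<in>P. r p < n \<longrightarrow> (\<exists>q\<in>P. strict le p q \<and> r q = r p + 1)) \<and>
     (\<forall>x\<in>P. \<forall>y\<in>P. strict le x y \<and> r x + 1 < r y \<longrightarrow> (\<exists>z\<in>P. strict le x z \<and> strict le z y))"

lemma card_chain_below:
  assumes fin: "finite S" and sub: "S \<subseteq> P" and p: "p \<in> P"
    and mono: "monoR P le r"
    and ch: "\<forall>x\<in>S. \<forall>y\<in>S. le x y \<or> le y x"
    and below: "\<forall>x\<in>S. le x p"
  shows "card S \<le> r p + 1"
proof -
  have inj: "inj_on r S"
  proof (rule inj_onI)
    fix x y assume xy: "x \<in> S" "y \<in> S" "r x = r y"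
    show "x = y"
    proof (rule ccontr)
      assume "x \<noteq> y"
      then have "strict le x y \<or> strict le y x" using ch xy by (auto simp: strict_def)
      then show False using mono xy sub unfolding monoR_def by (metis less_irrefl subsetD)
    qed
  qed
  have "r ` S \<subseteq> {0..r p}"
  proof
    fix k assume "k \<in> r ` S"
    then obtain x where x: "x \<in> S" "k = r x" by auto
    have "x = p \<or> strict le x p" using below x by (auto simp: strict_def)
    then have "r x \<le> r p" using mono x sub p unfolding monoR_def by (metis less_imp_le order_refl subsetD)
    then show "k \<in> {0..r p}" using x by simp
  qed
  then have "card (r ` S) \<le> r p + 1" using card_mono[OF finite_atLeastAtMost[of 0 "r p"]] by simp
  then show ?thesis using card_image[OF inj] by simp
qed

lemma rank_set_finite:
  assumes "finite P"
  shows "finite {length xs - 1 | xs. xs \<noteq> [] \<and> set xs \<subseteq> P \<and> sorted_wrt (strict le) xs \<and> last xs = p}"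
proof -
  have "{length xs - 1 | xs. xs \<noteq> [] \<and> set xs \<subseteq> P \<and> sorted_wrt (strict le) xs \<and> last xs = p} \<subseteq> {0..card P}"
  proof
    fix k assume "k \<in> {length xs - 1 | xs. xs \<noteq> [] \<and> set xs \<subseteq> P \<and> sorted_wrt (strict le) xs \<and> last xs = p}"
    then obtain xs where xs: "k = length xs - 1" "set xs \<subseteq> P" "sorted_wrt (strict le) xs" by auto
    have "length xs = card (set xs)" using sorted_wrt_strict_distinct[OF xs(3)] by (simp add: distinct_card)
    also have "\<dots> \<le> card P" using xs(2) assms by (simp add: card_mono)
    finally show "k \<in> {0..card P}" using xs by simp
  qed
  then show ?thesis using finite_subset by blast
qed

lemma rank_ge:
  assumes "finite P" "xs \<noteq> []" "set xs \<subseteq> P" "sorted_wrt (strict le) xs" "last xs = p"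
  shows "length xs - 1 \<le> rank_in P le p"
  unfolding rank_in_def
  by (rule Max_ge[OF rank_set_finite[OF assms(1)]]) (use assms in blast)

lemma rank_wit:
  assumes "finite P" "p \<in> P"
  shows "\<exists>xs. xs \<noteq> [] \<and> set xs \<subseteq> P \<and> sorted_wrt (strict le) xs \<and> last xs = p \<and>
           length xs = rank_in P le p + 1"
proof -
  let ?S = "{length xs - 1 | xs. xs \<noteq> [] \<and> set xs \<subseteq> P \<and> sorted_wrt (strict le) xs \<and> last xs = p}"
  have ne: "?S \<noteq> {}"
  proof -
    have "length [p] - 1 \<in> ?S" using assms by fastforce
    then show ?thesis by blast
  qed
  have "Max ?S \<in> ?S" by (rule Max_in[OF rank_set_finite[OF assms(1)] ne])
  then obtain xs where "Max ?S = length xs - 1" "xs \<noteq> []" "set xs \<subseteq> P" "sorted_wrt (strict le) xs" "last xs = p"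
    by auto
  then show ?thesis unfolding rank_in_def by (intro exI[of _ xs]) auto
qed

lemma rank_char:
  assumes fin: "finite P" and po: "poset_on P le" and mono: "monoR P le r" and down: "downR P le r"
    and p: "p \<in> P"
  shows "rank_in P le p = r p"
proof (rule antisym)
  obtain xs where xs: "xs \<noteq> []" "set xs \<subseteq> P" "sorted_wrt (strict le) xs" "last xs = p"
     "length xs = rank_in P le p + 1" using rank_wit[OF fin p] by blast
  have "card (set xs) \<le> r p + 1"
  proof (rule card_chain_below[OF _ xs(2) p mono])
    show "\<forall>x\<in>set xs. \<forall>y\<in>set xs. le x y \<or> le y x"
      using sorted_comp[OF xs(3)] posetD(1)[OF po] xs(2) by (fastforce simp: strict_def)
    show "\<forall>x\<in>set xs. le x p"
      using sorted_last[OF xs(3)] xs posetD(1)[OF po] by (fastforce simp: strict_def)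
  qed simp
  then show "rank_in P le p \<le> r p"
    using xs sorted_wrt_strict_distinct[OF xs(3)] by (simp add: distinct_card)
next
  have "\<forall>p\<in>P. r p = k \<longrightarrow> (\<exists>xs. xs \<noteq> [] \<and> set xs \<subseteq> P \<and> sorted_wrt (strict le) xs \<and> last xs = p \<and> length xs = r p + 1)" for k
  proof (induction k)
    case 0
    then show ?case by (intro ballI impI exI[of _ "[p]" for p]) auto
  next
    case (Suc k)
    show ?case
    proof (intro ballI impI)
      fix p assume p: "p \<in> P" "r p = Suc k"
      then obtain q where q: "q \<in> P" "strict le q p" "r q + 1 = r p" using down unfolding downR_def by force
      then obtain xs where xs: "xs \<noteq> []" "set xs \<subseteq> P" "sorted_wrt (strict le) xs" "last xs = q" "length xs = r q + 1"
        using Suc.IH p by auto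
      have "\<forall>x\<in>set xs. strict le x p"
      proof
        fix x assume x: "x \<in> set xs"
        have "x = q \<or> strict le x q" using sorted_last[OF xs(3) x] xs(4) by simp
        then show "strict le x p"
        proof
          assume "strict le x q"
          then have "le x p" using posetD(3)[OF po, where x=x and y=q and z=p] q x xs(2) p by (auto simp: strict_def)
          moreover have "x \<noteq> p" using posetD(2)[OF po, where x=x and y=q] q x xs(2) p \<open>strict le x q\<close> by (auto simp: strict_def)
          ultimately show ?thesis by (simp add: strict_def)
        qed (use q in simp)
      qed
      then show "\<exists>xs. xs \<noteq> [] \<and> set xs \<subseteq> P \<and> sorted_wrt (strict le) xs \<and> last xs = p \<and> length xs = r p + 1"
        using xs p q by (intro exI[of _ "xs @ [p]"]) (auto simp: sorted_wrt_append)
    qed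
  qed
  then obtain xs where "xs \<noteq> []" "set xs \<subseteq> P" "sorted_wrt (strict le) xs" "last xs = p" "length xs = r p + 1"
    using p by blast
  from rank_ge[OF fin this(1-4)] this(5) show "r p \<le> rank_in P le p" by simp
qed

lemma chainD:
  assumes "chain_in P le C"
  shows "C \<subseteq> P" "x \<in> C \<Longrightarrow> y \<in> C \<Longrightarrow> le x y \<or> le y x"
  using assms unfolding chain_in_def by blast+

lemma chain_ext:
  assumes fin: "finite P" and ch: "chain_in P le C"
  shows "\<exists>D. maxchain_in P le D \<and> C \<subseteq> D"
proof -
  let ?F = "{D. chain_in P le D \<and> C \<subseteq> D}"
  have "?F \<subseteq> Pow P" unfolding chain_in_def by blast
  then have finF: "finite ?F" by (rule finite_subset) (simp add: fin)
  have neF: "?F \<noteq> {}" using ch by blast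
  obtain D where D: "D \<in> ?F" "\<forall>E\<in>?F. D \<subseteq> E \<longrightarrow> D = E"
    using finite_has_maximal[OF finF neF] by blast
  have "maxchain_in P le D" unfolding maxchain_in_def
  proof (intro conjI allI impI)
    show "chain_in P le D" using D by blast
    fix E assume "chain_in P le E \<and> D \<subseteq> E"
    then show "E = D" using D by blast
  qed
  then show ?thesis using D by blast
qed

lemma chain_max:
  assumes po: "poset_on P le" and fin: "finite S" and ne: "S \<noteq> {}" and sub: "S \<subseteq> P"
    and ch: "\<forall>x\<in>S. \<forall>y\<in>S. le x y \<or> le y x"
  shows "\<exists>q\<in>S. \<forall>x\<in>S. le x q"
  using fin ne sub ch
proof (induction S rule: finite_ne_induct)
  case (singleton x)
  then show ?case using posetD(1)[OF po] by auto
next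
  case (insert a S)
  then obtain q where q: "q \<in> S" "\<forall>x\<in>S. le x q" by auto
  show ?case
  proof (cases "le q a")
    case True
    have "\<forall>x\<in>insert a S. le x a"
    proof
      fix x assume x: "x \<in> insert a S"
      show "le x a"
      proof (cases "x = a")
        case True
        then show ?thesis using posetD(1)[OF po] insert.prems by auto
      next
        case False
        then have "x \<in> S" using x by blast
        then show ?thesis using posetD(3)[OF po, of x q a] q \<open>le q a\<close> insert.prems by blast
      qed
    qed
    then show ?thesis by blast
  next
    case False
    then have "le a q" using insert.prems q by blast
    then show ?thesis using q by auto
  qed
qed

lemma chain_min:
  assumes po: "poset_on P le" and fin: "finite S" and ne: "S \<noteq> {}" and sub: "S \<subseteq> P"
    and ch: "\<forall>x\<in>S. \<forall>y\<in>S. le x y \<or> le y x"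
  shows "\<exists>q\<in>S. \<forall>x\<in>S. le q x"
  using fin ne sub ch
proof (induction S rule: finite_ne_induct)
  case (singleton x)
  then show ?case using posetD(1)[OF po] by auto
next
  case (insert a S)
  then obtain q where q: "q \<in> S" "\<forall>x\<in>S. le q x" by auto
  show ?case
  proof (cases "le a q")
    case True
    have "\<forall>x\<in>insert a S. le a x"
    proof
      fix x assume x: "x \<in> insert a S"
      show "le a x"
      proof (cases "x = a")
        case True
        then show ?thesis using posetD(1)[OF po] insert.prems by auto
      next
        case False
        then have "x \<in> S" using x by blast
        then show ?thesis using posetD(3)[OF po, of a q x] q \<open>le a q\<close> insert.prems by blast
      qed
    qed
    then show ?thesis by blast
  next
    case False
    then have "le q a" using insert.prems q by blast
    then show ?thesis using q by auto
  qed
qed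

lemma wit_list_props:
  assumes po: "poset_on P le" and xs: "xs \<noteq> []" "set xs \<subseteq> P" "sorted_wrt (strict le) xs" "last xs = p"
  shows "chain_in P le (set xs)" "\<forall>x\<in>set xs. le x p" "p \<in> set xs" "card (set xs) = length xs"
proof -
  show "chain_in P le (set xs)" unfolding chain_in_def
    using sorted_comp[OF xs(3)] posetD(1)[OF po] xs(2) by (fastforce simp: strict_def)
  show "\<forall>x\<in>set xs. le x p"
    using sorted_last[OF xs(3)] xs posetD(1)[OF po] by (fastforce simp: strict_def)
  show "p \<in> set xs" using xs by auto
  show "card (set xs) = length xs" using sorted_wrt_strict_distinct[OF xs(3)] by (simp add: distinct_card)
qed

lemma G1:
  assumes fin: "finite P" and po: "poset_on P le" and rk: "ranked_of_rank P le n"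
  shows "graded P le (rank_in P le) n"
proof -
  let ?r = "rank_in P le"
  have mono: "monoR P le ?r" unfolding monoR_def
  proof (intro ballI impI)
    fix x y assume xy: "x \<in> P" "y \<in> P" "strict le x y"
    obtain xs where xs: "xs \<noteq> []" "set xs \<subseteq> P" "sorted_wrt (strict le) xs" "last xs = x" "length xs = ?r x + 1"
      using rank_wit[OF fin xy(1)] by blast
    have "\<forall>z\<in>set xs. strict le z y"
    proof
      fix z assume z: "z \<in> set xs"
      have "z = x \<or> strict le z x" using sorted_last[OF xs(3) z] xs(4) by simp
      then show "strict le z y"
      proof
        assume zx: "strict le z x"
        have zP: "z \<in> P" using z xs(2) by blast
        have "le z y" using posetD(3)[OF po zP xy(1) xy(2)] zx xy(3) by (simp add: strict_def)
        moreover have "z \<noteq> y" using posetD(2)[OF po zP xy(1)] zx xy(3) by (auto simp: strict_def)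
        ultimately show ?thesis by (simp add: strict_def)
      qed (use xy in simp)
    qed
    then have "length (xs @ [y]) - 1 \<le> ?r y"
      using xs xy by (intro rank_ge[OF fin]) (auto simp: sorted_wrt_append)
    then show "?r x < ?r y" using xs by simp
  qed
  have chain_le: "card C \<le> n + 1" if chC: "chain_in P le C" for C
  proof -
    obtain D where D: "maxchain_in P le D" "C \<subseteq> D" using chain_ext[OF fin chC] by blast
    have "D \<subseteq> P" using D(1) unfolding maxchain_in_def chain_in_def by blast
    then have "card C \<le> card D" using D(2) fin by (meson card_mono finite_subset)
    then show ?thesis using rk D(1) unfolding ranked_of_rank_def by simp
  qed
  have wit: "\<exists>W. chain_in P le W \<and> p \<in> W \<and> (\<forall>x\<in>W. le x p) \<and> card W = ?r p + 1 \<and> finite W" if p: "p \<in> P" for p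
  proof -
    obtain xs where xs: "xs \<noteq> []" "set xs \<subseteq> P" "sorted_wrt (strict le) xs" "last xs = p" "length xs = ?r p + 1"
      using rank_wit[OF fin p] by blast
    show ?thesis using wit_list_props[OF po xs(1-4)] xs(5) by (intro exI[of _ "set xs"]) auto
  qed
  have bound: "\<forall>p\<in>P. ?r p \<le> n"
  proof
    fix p assume "p \<in> P"
    then obtain W where "chain_in P le W" "card W = ?r p + 1" using wit by blast
    then show "?r p \<le> n" using chain_le by fastforce
  qed
  have key: "card {x\<in>D. le x c} = ?r c + 1" if D: "maxchain_in P le D" and c: "c \<in> D" for D c
  proof -
    have chD: "chain_in P le D" using D unfolding maxchain_in_def by blast
    have DP: "D \<subseteq> P" using chainD(1)[OF chD] .
    have finD: "finite D" using DP fin finite_subset by blast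
    have cP: "c \<in> P" using c DP by blast
    let ?A = "{x\<in>D. le x c}"
    let ?U = "{x\<in>D. \<not> le x c}"
    have le1: "card ?A \<le> ?r c + 1"
      by (rule card_chain_below[OF _ _ cP mono]) (use finD DP chainD(2)[OF chD] in auto)
    obtain W where W: "chain_in P le W" "c \<in> W" "\<forall>x\<in>W. le x c" "card W = ?r c + 1" "finite W"
      using wit[OF cP] by blast
    have WP: "W \<subseteq> P" using chainD(1)[OF W(1)] .
    have chWU: "chain_in P le (W \<union> ?U)" unfolding chain_in_def
    proof (intro conjI ballI)
      show "W \<union> ?U \<subseteq> P" using WP DP by blast
      fix x y assume x: "x \<in> W \<union> ?U" and y: "y \<in> W \<union> ?U"
      have cmp: "le w u" if "w \<in> W" "u \<in> ?U" for w u
      proof -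
        have "le c u" using chainD(2)[OF chD c, of u] that by blast
        then show ?thesis using posetD(3)[OF po, of w c u] that W(3) WP DP cP by blast
      qed
      show "le x y \<or> le y x"
        using x y cmp chainD(2)[OF W(1)] chainD(2)[OF chD] by blast
    qed
    have disj: "W \<inter> ?U = {}" using W(3) by blast
    have "card (W \<union> ?U) = card W + card ?U" using card_Un_disjoint[OF W(5) _ disj] finD by simp
    then have "card W + card ?U \<le> n + 1" using chain_le[OF chWU] by simp
    moreover have "card D = n + 1" using rk D unfolding ranked_of_rank_def by blast
    moreover have "card D = card ?A + card ?U"
    proof -
      have "D = ?A \<union> ?U" by blast
      moreover have "card (?A \<union> ?U) = card ?A + card ?U" by (rule card_Un_disjoint) (use finD in auto)
      ultimately show ?thesis by simp
    qed
    ultimately show ?thesis using le1 W(4) by linarith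
  qed
  have down: "downR P le ?r" unfolding downR_def
  proof (intro ballI impI)
    fix p assume p: "p \<in> P" "0 < ?r p"
    obtain xs where xs: "xs \<noteq> []" "set xs \<subseteq> P" "sorted_wrt (strict le) xs" "last xs = p" "length xs = ?r p + 1"
      using rank_wit[OF fin p(1)] by blast
    define ys where "ys = butlast xs"
    have xsys: "xs = ys @ [p]" using xs(1,4) unfolding ys_def by (metis append_butlast_last_id)
    have ys: "ys \<noteq> []" using xs(5) p(2) xsys by auto
    have sys: "sorted_wrt (strict le) ys" "\<forall>y\<in>set ys. strict le y p" using xs(3) unfolding xsys by (auto simp: sorted_wrt_append)
    define q where "q = last ys"
    have qin: "q \<in> set ys" using ys unfolding q_def by simp
    have qP: "q \<in> P" using qin xs(2) xsys by auto
    have "length ys - 1 \<le> ?r q" using rank_ge[OF fin ys _ sys(1)] xs(2) xsys q_def by auto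
    moreover have "?r q < ?r p" using mono qP p(1) sys(2) qin unfolding monoR_def by blast
    ultimately have "?r q + 1 = ?r p" using xs(5) xsys by simp
    then show "\<exists>q\<in>P. strict le q p \<and> ?r q + 1 = ?r p" using qP sys(2) qin by blast
  qed
  have up: "\<forall>p\<in>P. ?r p < n \<longrightarrow> (\<exists>q\<in>P. strict le p q \<and> ?r q = ?r p + 1)"
  proof (intro ballI impI)
    fix p assume p: "p \<in> P" "?r p < n"
    obtain W where W: "chain_in P le W" "p \<in> W" "\<forall>x\<in>W. le x p" "card W = ?r p + 1" "finite W"
      using wit[OF p(1)] by blast
    obtain D where D: "maxchain_in P le D" "W \<subseteq> D" using chain_ext[OF fin W(1)] by blast
    have chD: "chain_in P le D" using D unfolding maxchain_in_def by blast
    have DP: "D \<subseteq> P" using chainD(1)[OF chD] .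
    have finD: "finite D" using DP fin finite_subset by blast
    have pD: "p \<in> D" using D W by blast
    let ?A = "{x\<in>D. le x p}"
    let ?U = "{x\<in>D. \<not> le x p}"
    have cA: "card ?A = ?r p + 1" using key[OF D(1) pD] .
    have cD: "card D = n + 1" using rk D unfolding ranked_of_rank_def by blast
    have "?U \<noteq> {}"
    proof
      assume "?U = {}"
      then have "D = ?A" by blast
      then show False using cA cD p(2) by simp
    qed
    moreover have "finite ?U" using finD by simp
    moreover have "?U \<subseteq> P" using DP by blast
    moreover have "\<forall>x\<in>?U. \<forall>y\<in>?U. le x y \<or> le y x" using chainD(2)[OF chD] by blast
    ultimately obtain y where y: "y \<in> ?U" "\<forall>x\<in>?U. le y x"
      using chain_min[OF po, of ?U] by blast
    have yD: "y \<in> D" and yP: "y \<in> P" using y DP by auto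
    have py: "le p y" using chainD(2)[OF chD pD yD] y by blast
    have pney: "p \<noteq> y" using y posetD(1)[OF po] p by blast
    have eq: "{x\<in>D. le x y} = insert y ?A"
    proof (rule set_eqI, rule iffI)
      fix x assume x: "x \<in> {x\<in>D. le x y}"
      show "x \<in> insert y ?A"
      proof (cases "le x p")
        case False
        then have "le y x" using y x by blast
        then have "x = y" using posetD(2)[OF po, of x y] x DP yP by blast
        then show ?thesis by blast
      qed (use x in blast)
    next
      fix x assume "x \<in> insert y ?A"
      then show "x \<in> {x\<in>D. le x y}"
        using posetD(1)[OF po yP] yD posetD(3)[OF po, of x p y] py DP p(1) by blast
    qed
    have "y \<notin> ?A" using y by blast
    then have "card {x\<in>D. le x y} = ?r p + 2" using eq cA finD by simp
    then have "?r y = ?r p + 1" using key[OF D(1) yD] by simp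
    then show "\<exists>q\<in>P. strict le p q \<and> ?r q = ?r p + 1" using yP py pney by (auto simp: strict_def)
  qed
  have gap: "\<forall>x\<in>P. \<forall>y\<in>P. strict le x y \<and> ?r x + 1 < ?r y \<longrightarrow> (\<exists>z\<in>P. strict le x z \<and> strict le z y)"
  proof (intro ballI impI)
    fix x y assume x: "x \<in> P" and y: "y \<in> P" and xy: "strict le x y \<and> ?r x + 1 < ?r y"
    obtain W where W: "chain_in P le W" "x \<in> W" "\<forall>w\<in>W. le w x" "card W = ?r x + 1" "finite W"
      using wit[OF x] by blast
    have WP: "W \<subseteq> P" using chainD(1)[OF W(1)] .
    have chS: "chain_in P le (insert y W)" unfolding chain_in_def
    proof (intro conjI ballI)
      show "insert y W \<subseteq> P" using WP y by blast
      fix a b assume a: "a \<in> insert y W" and b: "b \<in> insert y W"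
      have wy: "le w y" if "w \<in> W" for w
        using posetD(3)[OF po, of w x y] that W(3) WP x y xy by (auto simp: strict_def)
      show "le a b \<or> le b a" using a b wy chainD(2)[OF W(1)] posetD(1)[OF po y] by blast
    qed
    obtain D where D: "maxchain_in P le D" "insert y W \<subseteq> D" using chain_ext[OF fin chS] by blast
    have chD: "chain_in P le D" using D unfolding maxchain_in_def by blast
    have DP: "D \<subseteq> P" using chainD(1)[OF chD] .
    have finD: "finite D" using DP fin finite_subset by blast
    have xD: "x \<in> D" and yD: "y \<in> D" using D W by auto
    let ?Ax = "{z\<in>D. le z x}" and ?Ay = "{z\<in>D. le z y}"
    have sub: "?Ax \<subseteq> ?Ay"
    proof
      fix z assume z: "z \<in> ?Ax"
      then have "le z y" using posetD(3)[OF po, of z x y] xy x y DP by (auto simp: strict_def)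
      then show "z \<in> ?Ay" using z by blast
    qed
    have "card (?Ay - ?Ax) = card ?Ay - card ?Ax" using sub finD by (simp add: card_Diff_subset)
    also have "\<dots> = ?r y - ?r x" using key[OF D(1) xD] key[OF D(1) yD] by simp
    finally have c2: "card (?Ay - ?Ax) \<ge> 2" using xy by linarith
    have "?Ay - ?Ax - {y} \<noteq> {}"
    proof
      assume "?Ay - ?Ax - {y} = {}"
      then have "?Ay - ?Ax \<subseteq> {y}" by blast
      then have "card (?Ay - ?Ax) \<le> card {y}" by (rule card_mono[rotated]) simp
      then have "card (?Ay - ?Ax) \<le> 1" by simp
      then show False using c2 by simp
    qed
    then obtain z where z: "z \<in> D" "le z y" "\<not> le z x" "z \<noteq> y" by blast
    have "le x z" using chainD(2)[OF chD xD z(1)] z(3) by blast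
    moreover have "x \<noteq> z" using z(3) posetD(1)[OF po x] by blast
    ultimately show "\<exists>z\<in>P. strict le x z \<and> strict le z y" using z DP by (auto simp: strict_def)
  qed
  show ?thesis unfolding graded_def using bound mono down up gap by blast
qed

lemma gradedD:
  assumes "graded P le r n"
  shows "p \<in> P \<Longrightarrow> r p \<le> n"
    and "x \<in> P \<Longrightarrow> y \<in> P \<Longrightarrow> strict le x y \<Longrightarrow> r x < r y"
    and "p \<in> P \<Longrightarrow> 0 < r p \<Longrightarrow> \<exists>q\<in>P. strict le q p \<and> r q + 1 = r p"
    and "p \<in> P \<Longrightarrow> r p < n \<Longrightarrow> \<exists>q\<in>P. strict le p q \<and> r q = r p + 1"
    and "x \<in> P \<Longrightarrow> y \<in> P \<Longrightarrow> strict le x y \<Longrightarrow> r x + 1 < r y \<Longrightarrow> \<exists>z\<in>P. strict le x z \<and> strict le z y"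
    and "monoR P le r" and "downR P le r"
  using assms unfolding graded_def monoR_def downR_def by blast+

lemma chain_r_le:
  assumes g: "graded P le r n" and ch: "chain_in P le C" and c: "c \<in> C" "d \<in> C" and "r c \<le> r d"
  shows "le c d"
proof (rule ccontr)
  assume "\<not> le c d"
  then have "le d c" "d \<noteq> c" using chainD(2)[OF ch c] by auto
  then have "r d < r c" using gradedD(2)[OF g, of d c] chainD(1)[OF ch] c by (auto simp: strict_def)
  then show False using assms by simp
qed

lemma G2:
  assumes fin: "finite P" and po: "poset_on P le" and ne: "P \<noteq> {}" and g: "graded P le r n"
  shows "ranked_of_rank P le n"
  unfolding ranked_of_rank_def
proof (intro allI impI)
  fix C assume mc: "maxchain_in P le C"
  have ch: "chain_in P le C" using mc unfolding maxchain_in_def by blast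
  have CP: "C \<subseteq> P" using chainD(1)[OF ch] .
  have finC: "finite C" by (rule finite_subset[OF CP fin])
  have ins: False if z: "z \<in> P" "z \<notin> C" "\<forall>c\<in>C. le c z \<or> le z c" for z
  proof -
    have "chain_in P le (insert z C)" unfolding chain_in_def
      using z CP chainD(2)[OF ch] posetD(1)[OF po] by blast
    then have "insert z C = C" using mc unfolding maxchain_in_def by blast
    then show False using z by blast
  qed
  have Cne: "C \<noteq> {}"
  proof
    assume "C = {}"
    obtain p where "p \<in> P" using ne by blast
    then show False using ins[of p] \<open>C = {}\<close> by blast
  qed
  have inj: "inj_on r C"
  proof (rule inj_onI)
    fix x y assume xy: "x \<in> C" "y \<in> C" "r x = r y"
    have "le x y" using chain_r_le[OF g ch xy(1) xy(2)] xy(3) by simp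
    moreover have "le y x" using chain_r_le[OF g ch xy(2) xy(1)] xy(3) by simp
    ultimately show "x = y" using posetD(2)[OF po, of x y] CP \<open>x \<in> C\<close> \<open>y \<in> C\<close> by blast
  qed
  have img: "r ` C = {0..n}"
  proof
    show "r ` C \<subseteq> {0..n}" using gradedD(1)[OF g] CP by auto
    show "{0..n} \<subseteq> r ` C"
    proof
      fix k assume k: "k \<in> {0..n}"
      show "k \<in> r ` C"
      proof (rule ccontr)
        assume nk: "k \<notin> r ` C"
        let ?lo = "{c\<in>C. r c < k}" and ?hi = "{c\<in>C. k < r c}"
        have Cu: "\<forall>c\<in>C. c \<in> ?lo \<or> c \<in> ?hi"
        proof
          fix c assume c: "c \<in> C"
          then have "r c \<noteq> k" using nk by (metis imageI)
          then show "c \<in> ?lo \<or> c \<in> ?hi" using c by auto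
        qed
        show False
        proof (cases "?lo = {}")
          case True
          then have allhi: "\<forall>c\<in>C. k < r c" using Cu by blast
          have "Min (r ` C) \<in> r ` C" using finC Cne by (simp add: Min_in)
          then obtain y where y: "y \<in> C" "r y = Min (r ` C)" by (metis imageE)
          have yP: "y \<in> P" using y CP by blast
          have "0 < r y" using allhi y by fastforce
          then obtain q where q: "q \<in> P" "strict le q y" "r q + 1 = r y" using gradedD(3)[OF g yP] by blast
          have qC: "q \<notin> C"
          proof
            assume "q \<in> C"
            then have "r y \<le> r q" using y finC by simp
            then show False using q by simp
          qed
          have "\<forall>c\<in>C. le q c"
          proof
            fix c assume c: "c \<in> C"
            have "r y \<le> r c" using y c finC by simp
            then have "le y c" using chain_r_le[OF g ch y(1) c] by blast
            then show "le q c" using posetD(3)[OF po, of q y c] q yP c CP by (auto simp: strict_def)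
          qed
          then show False using ins[OF q(1) qC] by blast
        next
          case lo: False
          show False
          proof (cases "?hi = {}")
            case True
            then have alllo: "\<forall>c\<in>C. r c < k" using Cu by blast
            have "Max (r ` C) \<in> r ` C" using finC Cne by (simp add: Max_in)
            then obtain x where x: "x \<in> C" "r x = Max (r ` C)" by (metis imageE)
            have xP: "x \<in> P" using x CP by blast
            have "r x < n" using alllo x k by fastforce
            then obtain q where q: "q \<in> P" "strict le x q" "r q = r x + 1" using gradedD(4)[OF g xP] by blast
            have qC: "q \<notin> C"
            proof
              assume "q \<in> C"
              then have "r q \<le> r x" using x finC by simp
              then show False using q by simp
            qed
            have "\<forall>c\<in>C. le c q"
            proof
              fix c assume c: "c \<in> C"
              have "r c \<le> r x" using x c finC by simp
              then have "le c x" using chain_r_le[OF g ch c x(1)] by blast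
              then show "le c q" using posetD(3)[OF po, of c x q] q xP c CP by (auto simp: strict_def)
            qed
            then show False using ins[OF q(1) qC] by blast
          next
            case hi: False
            have finlo: "finite ?lo" and finhi: "finite ?hi" using finC by auto
            have "Max (r ` ?lo) \<in> r ` ?lo" using Max_in[OF finite_imageI[OF finlo]] lo by blast
            then obtain x where x: "x \<in> ?lo" "r x = Max (r ` ?lo)" unfolding image_iff by (elim bexE) (rule that, assumption, simp)
            have "Min (r ` ?hi) \<in> r ` ?hi" using Min_in[OF finite_imageI[OF finhi]] hi by blast
            then obtain y where y: "y \<in> ?hi" "r y = Min (r ` ?hi)" unfolding image_iff by (elim bexE) (rule that, assumption, simp)
            have xP: "x \<in> P" and yP: "y \<in> P" using x y CP by auto
            have rxy: "r x + 1 < r y" using x y by auto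
            have "le x y" using chain_r_le[OF g ch _ _ , of x y] x y rxy by simp
            moreover have "x \<noteq> y" using rxy by auto
            ultimately obtain z where z: "z \<in> P" "strict le x z" "strict le z y"
              using gradedD(5)[OF g xP yP] rxy by (auto simp: strict_def)
            have rz: "r x < r z" "r z < r y" using gradedD(2)[OF g xP z(1) z(2)] gradedD(2)[OF g z(1) yP z(3)] by auto
            have zC: "z \<notin> C"
            proof
              assume zC: "z \<in> C"
              show False
              proof (cases "r z < k")
                case True
                then have "r z \<le> r x" using x zC finlo by simp
                then show False using rz by simp
              next
                case False
                then have "k < r z" using nk zC by (metis imageI linorder_neqE_nat)
                then have "r y \<le> r z" using y zC finhi by simp
                then show False using rz by simp
              qed
            qed
            have "\<forall>c\<in>C. le c z \<or> le z c"
            proof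
              fix c assume c: "c \<in> C"
              show "le c z \<or> le z c"
              proof (cases "r c < k")
                case True
                then have "r c \<le> r x" using x c finlo by simp
                then have "le c x" using chain_r_le[OF g ch c] x by blast
                then show ?thesis using posetD(3)[OF po, of c x z] z xP c CP by (auto simp: strict_def)
              next
                case False
                then have "k < r c" using nk c by (metis imageI linorder_neqE_nat)
                then have "r y \<le> r c" using y c finhi by simp
                then have "le y c" using chain_r_le[OF g ch _ c] y by blast
                then show ?thesis using posetD(3)[OF po, of z y c] z yP c CP by (auto simp: strict_def)
              qed
            qed
            then show False using ins[OF z(1) zC] by blast
          qed
        qed
      qed
    qed
  qed
  have "card C = card (r ` C)" using card_image[OF inj] by simp
  then show "card C = n + 1" using img by simp
qed

lemma step_down:
  assumes po: "poset_on P le" and g: "graded P le r n"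
  shows "x \<in> P \<Longrightarrow> y \<in> P \<Longrightarrow> strict le x y \<Longrightarrow> \<exists>z\<in>P. r z + 1 = r y \<and> le x z \<and> strict le z y"
proof (induction "r y - r x" arbitrary: x rule: less_induct)
  case less
  show ?case
  proof (cases "r x + 1 < r y")
    case False
    have "r x < r y" using gradedD(2)[OF g] less.prems by blast
    then have "r x + 1 = r y" using False by simp
    then show ?thesis using less.prems posetD(1)[OF po] by blast
  next
    case True
    then obtain z where z: "z \<in> P" "strict le x z" "strict le z y" using gradedD(5)[OF g] less.prems by blast
    have "r x < r z" using gradedD(2)[OF g] z less.prems by blast
    then have "r y - r z < r y - r x" using gradedD(2)[OF g] z less.prems by (meson diff_less_mono2 less_trans)
    then obtain w where w: "w \<in> P" "r w + 1 = r y" "le z w" "strict le w y" using less.hyps z less.prems by blast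
    have "le x w" using posetD(3)[OF po, of x z w] z w less.prems by (auto simp: strict_def)
    then show ?thesis using w by blast
  qed
qed

lemma step_up:
  assumes po: "poset_on P le" and g: "graded P le r n"
  shows "x \<in> P \<Longrightarrow> y \<in> P \<Longrightarrow> strict le x y \<Longrightarrow> \<exists>z\<in>P. r z = r x + 1 \<and> strict le x z \<and> le z y"
proof (induction "r y - r x" arbitrary: y rule: less_induct)
  case less
  show ?case
  proof (cases "r x + 1 < r y")
    case False
    have "r x < r y" using gradedD(2)[OF g] less.prems by blast
    then have "r y = r x + 1" using False by simp
    then show ?thesis using less.prems posetD(1)[OF po] by blast
  next
    case True
    then obtain z where z: "z \<in> P" "strict le x z" "strict le z y" using gradedD(5)[OF g] less.prems by blast
    have "r z < r y" using gradedD(2)[OF g] z less.prems by blast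
    then have "r z - r x < r y - r x" using gradedD(2)[OF g] z less.prems by (meson diff_less_mono less_imp_le)
    then obtain w where w: "w \<in> P" "r w = r x + 1" "strict le x w" "le w z" using less.hyps z less.prems by blast
    have "le w y" using posetD(3)[OF po, of w z y] z w less.prems by (auto simp: strict_def)
    then show ?thesis using w by blast
  qed
qed

lemma down_exists:
  assumes po: "poset_on P le" and g: "graded P le r n"
  shows "p \<in> P \<Longrightarrow> j \<le> r p \<Longrightarrow> \<exists>z\<in>P. r z = j \<and> le z p"
proof (induction "r p - j" arbitrary: p)
  case 0
  then show ?case using posetD(1)[OF po] by auto
next
  case (Suc m)
  then have "0 < r p" by linarith
  then obtain q where q: "q \<in> P" "strict le q p" "r q + 1 = r p" using gradedD(3)[OF g, of p] Suc.prems by auto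
  have "m = r q - j" "j \<le> r q" using q Suc.hyps(2) Suc.prems by linarith+
  then obtain z where z: "z \<in> P" "r z = j" "le z q" using Suc.hyps(1) q(1) by blast
  then show ?case using posetD(3)[OF po, of z q p] q Suc.prems by (auto simp: strict_def)
qed

lemma up_exists:
  assumes po: "poset_on P le" and g: "graded P le r n"
  shows "p \<in> P \<Longrightarrow> r p \<le> j \<Longrightarrow> j \<le> n \<Longrightarrow> \<exists>z\<in>P. r z = j \<and> le p z"
proof (induction "j - r p" arbitrary: p)
  case 0
  then show ?case using posetD(1)[OF po] by auto
next
  case (Suc m)
  then have "r p < n" by linarith
  then obtain q where q: "q \<in> P" "strict le p q" "r q = r p + 1" using gradedD(4)[OF g, of p] Suc.prems by auto
  have "m = j - r q" "r q \<le> j" using q Suc.hyps(2) Suc.prems by linarith+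
  then obtain z where z: "z \<in> P" "r z = j" "le q z" using Suc.hyps(1) q(1) Suc.prems by blast
  then show ?case using posetD(3)[OF po, of p q z] q Suc.prems by (auto simp: strict_def)
qed

lemma level_anti:
  assumes g: "graded P le r n" and "x \<in> P" "y \<in> P" "r x = r y" "le x y"
  shows "x = y"
  using gradedD(2)[OF g, of x y] assms by (auto simp: strict_def)

lemma le_rank:
  assumes g: "graded P le r n" and "x \<in> P" "y \<in> P" "le x y"
  shows "r x \<le> r y"
  using gradedD(2)[OF g, of x y] assms by (cases "x = y") (auto simp: strict_def)

definition crown_lv :: "'a set \<Rightarrow> 'a set \<Rightarrow> ('a \<Rightarrow> 'a \<Rightarrow> bool) \<Rightarrow> bool" where
  "crown_lv A B le \<longleftrightarrow> card A = 3 \<and> card B = 3 \<and> (\<forall>x\<in>A. \<exists>!y. y \<in> B \<and> \<not> le x y) \<and>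
     (\<forall>y\<in>B. \<exists>!x. x \<in> A \<and> \<not> le x y)"

lemma lt3_cases: "(a::nat) < 3 \<Longrightarrow> a = 0 \<or> a = 1 \<or> a = 2" by auto
lemma lt6_cases: "3 \<le> (b::nat) \<Longrightarrow> b < 6 \<Longrightarrow> b = 3 \<or> b = 4 \<or> b = 5" by auto

lemma C6_miss:
  assumes "a < 3" "3 \<le> b" "b < 6"
  shows "(\<not> C6_le a b) = (b = 3 + (a+1) mod 3)"
proof -
  from lt3_cases[OF assms(1)] lt6_cases[OF assms(2,3)] show ?thesis
    by (elim disjE) (simp_all add: C6_le_def)
qed

lemma C6_miss2:
  assumes "3 \<le> b" "b < (6::nat)"
  shows "(b = 3 + (a+1) mod 3 \<and> a < 3) = (a = (b + 2) mod 3)"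
proof (cases "a < 3")
  case True
  from lt3_cases[OF True] lt6_cases[OF assms] show ?thesis
    by (elim disjE) simp_all
next
  case False
  have "(b + 2) mod 3 < 3" by simp
  then show ?thesis using False by auto
qed

lemma C6_le_ge3: "C6_le a b \<Longrightarrow> a \<noteq> b \<Longrightarrow> 3 \<le> b"
  by (auto simp: C6_le_def)

lemma iso_crown:
  assumes fin: "finite B" and po: "poset_on B le" and g: "graded B le (rank_in B le) n" and i: "i < n"
    and iso: "order_iso (levels B le i (i+1)) le C6 C6_le"
  shows "crown_lv {p\<in>B. rank_in B le p = i} {p\<in>B. rank_in B le p = i+1} le"
proof -
  let ?r = "rank_in B le"
  let ?A = "{p\<in>B. ?r p = i}" and ?B = "{p\<in>B. ?r p = i+1}"
  have Lv: "levels B le i (i+1) = ?A \<union> ?B" unfolding levels_def by auto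
  obtain h where h: "bij_betw h (?A \<union> ?B) C6" "\<forall>x\<in>?A \<union> ?B. \<forall>y\<in>?A \<union> ?B. le x y = C6_le (h x) (h y)"
    using iso unfolding order_iso_def Lv by blast
  have inj: "inj_on h (?A \<union> ?B)" and img: "h ` (?A \<union> ?B) = {0..<6}"
    using h(1) unfolding bij_betw_def C6_def by auto
  have hA: "h x < 3" if x: "x \<in> ?A" for x
  proof (rule ccontr)
    assume "\<not> h x < 3"
    moreover have "h x < 6" using img x by auto
    ultimately have c: "h x - 3 \<in> h ` (?A \<union> ?B)" "C6_le (h x - 3) (h x)" "h x - 3 \<noteq> h x"
      using img by (auto simp: C6_le_def)
    obtain z where z': "h x - 3 = h z" "z \<in> ?A \<union> ?B" using c(1) by (rule imageE)
    then have z: "z \<in> ?A \<union> ?B" "h z = h x - 3" by auto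
    have "le z x" using h(2) z x c by auto
    moreover have "z \<noteq> x" using z c by auto
    ultimately have "?r z < ?r x" using gradedD(2)[OF g, of z x] z x by (auto simp: strict_def)
    then show False using z x by auto
  qed
  have hB: "3 \<le> h y" if y: "y \<in> ?B" for y
  proof -
    have yB: "y \<in> B" "0 < ?r y" using y by auto
    obtain q where q: "q \<in> B" "strict le q y" "?r q + 1 = ?r y" using gradedD(3)[OF g yB] by blast
    have qA: "q \<in> ?A" using q y by auto
    have "C6_le (h q) (h y)" using h(2) qA y q(2) by (auto simp: strict_def)
    moreover have "h q \<noteq> h y" using inj qA y q(2) unfolding inj_on_def strict_def by blast
    ultimately show ?thesis by (rule C6_le_ge3)
  qed
  have hB6: "h y < 6" if "y \<in> ?A \<union> ?B" for y using img that by auto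
  have imA: "h ` ?A = {0..<3}"
  proof
    show "h ` ?A \<subseteq> {0..<3}" using hA by auto
    show "{0..<3} \<subseteq> h ` ?A"
    proof
      fix a assume a: "a \<in> {0..<(3::nat)}"
      then have "a \<in> h ` (?A \<union> ?B)" using img by auto
      then obtain z where z: "z \<in> ?A \<union> ?B" "a = h z" by blast
      have "z \<notin> ?B" using hB z a by fastforce
      then show "a \<in> h ` ?A" using z by blast
    qed
  qed
  have imB: "h ` ?B = {3..<6}"
  proof
    show "h ` ?B \<subseteq> {3..<6}" using hB hB6 by auto
    show "{3..<6} \<subseteq> h ` ?B"
    proof
      fix a assume a: "a \<in> {3..<(6::nat)}"
      then have "a \<in> h ` (?A \<union> ?B)" using img by auto
      then obtain z where z: "z \<in> ?A \<union> ?B" "a = h z" by blast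
      have "z \<notin> ?A" using hA z a by fastforce
      then show "a \<in> h ` ?B" using z by blast
    qed
  qed
  have injA: "inj_on h ?A" and injB: "inj_on h ?B" using inj by (auto intro: inj_on_subset)
  have cA: "card ?A = 3" using card_image[OF injA] imA by simp
  have cB: "card ?B = 3" using card_image[OF injB] imB by simp
  have hle: "le x y = C6_le (h x) (h y)" if "x \<in> ?A \<union> ?B" "y \<in> ?A \<union> ?B" for x y
    using h(2) that by blast
  have c1: "\<exists>!y. y \<in> ?B \<and> \<not> le x y" if x: "x \<in> ?A" for x
  proof -
    have hx: "h x < 3" using hA x .
    let ?b = "3 + (h x + 1) mod 3"
    have "?b \<in> h ` ?B" unfolding imB by simp
    then obtain y0 where y0': "?b = h y0" "y0 \<in> ?B" by (rule imageE)
    then have y0: "y0 \<in> ?B" "h y0 = ?b" by auto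
    have "\<not> C6_le (h x) (h y0)" using C6_miss[OF hx hB[OF y0(1)] hB6] y0 by blast
    then have n0: "\<not> le x y0" using hle[of x y0] x y0(1) by blast
    moreover have "y = y0" if y: "y \<in> ?B" "\<not> le x y" for y
    proof -
      have "\<not> C6_le (h x) (h y)" using hle[of x y] x y by blast
      then have "h y = ?b" using C6_miss[OF hx hB[OF y(1)] hB6] y(1) by blast
      then have "h y = h y0" using y0 by simp
      then show ?thesis using injB y(1) y0(1) unfolding inj_on_def by blast
    qed
    ultimately show ?thesis using y0(1) by blast
  qed
  have c2: "\<exists>!x. x \<in> ?A \<and> \<not> le x y" if y: "y \<in> ?B" for y
  proof -
    have hy: "3 \<le> h y" "h y < 6" using hB[OF y] hB6 y by auto
    let ?a = "(h y + 2) mod 3"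
    have "?a \<in> h ` ?A" unfolding imA by simp
    then obtain x0 where x0': "?a = h x0" "x0 \<in> ?A" by (rule imageE)
    then have x0: "x0 \<in> ?A" "h x0 = ?a" by auto
    have "h y = 3 + (h x0 + 1) mod 3" using C6_miss2[OF hy, of "h x0"] x0(2) hA[OF x0(1)] by blast
    then have "\<not> C6_le (h x0) (h y)" using C6_miss[OF hA[OF x0(1)] hy] by blast
    then have "\<not> le x0 y" using hle[of x0 y] x0(1) y by blast
    moreover have "x = x0" if x: "x \<in> ?A" "\<not> le x y" for x
    proof -
      have "\<not> C6_le (h x) (h y)" using hle[of x y] x y by blast
      then have "h y = 3 + (h x + 1) mod 3" using C6_miss[OF hA[OF x(1)] hy] by blast
      then have "h x = ?a" using C6_miss2[OF hy, of "h x"] hA[OF x(1)] by blast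
      then have "h x = h x0" using x0 by simp
      then show ?thesis using injA x(1) x0(1) unfolding inj_on_def by blast
    qed
    ultimately show ?thesis using x0(1) by blast
  qed
  show ?thesis unfolding crown_lv_def using cA cB c1 c2 by blast
qed

primrec labr :: "('a \<Rightarrow> nat) \<Rightarrow> (nat \<Rightarrow> 'a \<Rightarrow> 'a) \<Rightarrow> nat \<Rightarrow> 'a \<Rightarrow> nat" where
  "labr l0 ps 0 x = l0 x"
| "labr l0 ps (Suc i) x = labr l0 ps i (ps i x)"

lemma mod3_cancel: "(a::nat) < 3 \<Longrightarrow> b < 3 \<Longrightarrow> (a + 1) mod 3 = (b + 1) mod 3 \<Longrightarrow> a = b"
  by (drule lt3_cases, drule lt3_cases) auto

lemma mod3_ne: "(a::nat) < 3 \<Longrightarrow> (a + 1) mod 3 \<noteq> a"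
  by (drule lt3_cases) auto

lemma crown_stack_auto:
  assumes fin: "finite B" and po: "poset_on B le" and g: "graded B le r n" and n1: "1 \<le> n"
    and cr: "\<forall>i<n. crown_lv {p\<in>B. r p = i} {p\<in>B. r p = i+1} le"
  shows "\<exists>f. bij_betw f B B \<and> (\<forall>x\<in>B. \<forall>y\<in>B. le x y \<longleftrightarrow> le (f x) (f y)) \<and> (\<forall>x\<in>B. f x \<noteq> x)"
proof -
  define L where "L i = {p\<in>B. r p = i}" for i
  have Lmem: "x \<in> L i \<longleftrightarrow> x \<in> B \<and> r x = i" for x i unfolding L_def by simp
  have finL: "finite (L i)" for i unfolding L_def using fin by simp
  have crL: "crown_lv (L i) (L (Suc i)) le" if "i < n" for i using cr that unfolding L_def by simp
  have cardL: "card (L i) = 3" if "i \<le> n" for i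
  proof (cases "i < n")
    case True then show ?thesis using crL[OF True] unfolding crown_lv_def by blast
  next
    case False
    then have "i = Suc (n - 1)" using that n1 by simp
    moreover have "n - 1 < n" using n1 by simp
    ultimately show ?thesis using crL[of "n - 1"] unfolding crown_lv_def by simp
  qed
  obtain a0 a1 a2 where a: "L 0 = {a0, a1, a2}" "a0 \<noteq> a1" "a1 \<noteq> a2" "a0 \<noteq> a2"
    using cardL[of 0] unfolding card_3_iff by auto
  define l0 where "l0 x = (if x = a0 then 0 else if x = a1 then 1 else (2::nat))" for x
  define ps where "ps i y = (THE x. x \<in> L i \<and> \<not> le x y)" for i y
  have miss_y: "\<exists>!x. x \<in> L i \<and> \<not> le x y" if "i < n" "y \<in> L (Suc i)" for i y
    using crL[OF that(1)] that(2) unfolding crown_lv_def by blast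
  have miss_x: "\<exists>!y. y \<in> L (Suc i) \<and> \<not> le x y" if "i < n" "x \<in> L i" for i x
    using crL[OF that(1)] that(2) unfolding crown_lv_def by blast
  have ps: "ps i y \<in> L i \<and> \<not> le (ps i y) y" if "i < n" "y \<in> L (Suc i)" for i y
    unfolding ps_def by (rule theI'[OF miss_y[OF that]])
  have ps_uniq: "x = ps i y" if "i < n" "y \<in> L (Suc i)" "x \<in> L i" "\<not> le x y" for i x y
    using miss_y[OF that(1,2)] ps[OF that(1,2)] that(3,4) by blast
  have bij_ps: "bij_betw (ps i) (L (Suc i)) (L i)" if i: "i < n" for i
  proof -
    have inj: "inj_on (ps i) (L (Suc i))"
    proof (rule inj_onI)
      fix y y' assume y: "y \<in> L (Suc i)" "y' \<in> L (Suc i)" "ps i y = ps i y'"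
      have "ps i y \<in> L i" "\<not> le (ps i y) y" using ps[OF i y(1)] by auto
      moreover have "\<not> le (ps i y) y'" using ps[OF i y(2)] y(3) by auto
      ultimately show "y = y'" using miss_x[OF i, of "ps i y"] y(1,2) by blast
    qed
    have sub: "ps i ` L (Suc i) \<subseteq> L i" using ps[OF i] by auto
    have "card (ps i ` L (Suc i)) = card (L i)"
      using card_image[OF inj] cardL[of "Suc i"] cardL[of i] i by simp
    then have "ps i ` L (Suc i) = L i" using card_subset_eq[OF finL sub] by simp
    then show ?thesis using inj unfolding bij_betw_def by blast
  qed
  have bij_lab: "bij_betw (labr l0 ps i) (L i) {0,1,2}" if "i \<le> n" for i
    using that
  proof (induction i)
    case 0
    have "bij_betw l0 {a0, a1, a2} {0,1,2}"
      unfolding bij_betw_def inj_on_def l0_def using a(2-4) by auto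
    then show ?case using a(1) by simp
  next
    case (Suc i)
    have "bij_betw (labr l0 ps i \<circ> ps i) (L (Suc i)) {0,1,2}"
      using bij_betw_trans[OF bij_ps Suc.IH] Suc.prems by simp
    then show ?case by (simp add: comp_def)
  qed
  define lab where "lab x = labr l0 ps (r x) x" for x
  define sg where "sg x = inv_into (L (r x)) (labr l0 ps (r x)) ((lab x + 1) mod 3)" for x
  have xL: "x \<in> L (r x)" if "x \<in> B" for x using that Lmem by simp
  have rn: "r x \<le> n" if "x \<in> B" for x using gradedD(1)[OF g that] .
  have lab3: "lab x < 3" if x: "x \<in> B" for x
  proof -
    have "lab x \<in> {0,1,2}" unfolding lab_def
      using bij_betw_apply[OF bij_lab[OF rn[OF x]] xL[OF x]] .
    then show ?thesis by auto
  qed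
  have sgfacts: "sg x \<in> B \<and> r (sg x) = r x \<and> lab (sg x) = (lab x + 1) mod 3" if x: "x \<in> B" for x
  proof -
    have bj: "bij_betw (labr l0 ps (r x)) (L (r x)) {0,1,2}" using bij_lab[OF rn[OF x]] .
    have im: "(lab x + 1) mod 3 \<in> labr l0 ps (r x) ` L (r x)"
    proof -
      have "(lab x + 1) mod 3 < 3" by simp
      then have "(lab x + 1) mod 3 \<in> {0,1,2}" by auto
      then show ?thesis using bj unfolding bij_betw_def by simp
    qed
    have s1: "sg x \<in> L (r x)" unfolding sg_def by (rule inv_into_into[OF im])
    have s2: "labr l0 ps (r x) (sg x) = (lab x + 1) mod 3" unfolding sg_def by (rule f_inv_into_f[OF im])
    have "sg x \<in> B" "r (sg x) = r x" using s1 Lmem by auto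
    moreover have "lab (sg x) = (lab x + 1) mod 3" using s2 \<open>r (sg x) = r x\<close> unfolding lab_def by simp
    ultimately show ?thesis by blast
  qed
  have inj_lab: "x = y" if "x \<in> B" "y \<in> B" "r x = r y" "lab x = lab y" for x y
  proof -
    have "inj_on (labr l0 ps (r x)) (L (r x))" using bij_lab[OF rn[OF that(1)]] unfolding bij_betw_def by blast
    moreover have "x \<in> L (r x)" "y \<in> L (r x)" using that Lmem by auto
    moreover have "labr l0 ps (r x) x = labr l0 ps (r x) y" using that(3,4) unfolding lab_def by simp
    ultimately show ?thesis by (meson inj_onD)
  qed
  have sg_inj: "x = y" if "x \<in> B" "y \<in> B" "sg x = sg y" for x y
  proof -
    have r: "r x = r y" using sgfacts[OF that(1)] sgfacts[OF that(2)] that(3) by simp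
    have "(lab x + 1) mod 3 = (lab y + 1) mod 3" using sgfacts[OF that(1)] sgfacts[OF that(2)] that(3) by simp
    then have "lab x = lab y" using mod3_cancel[OF lab3[OF that(1)] lab3[OF that(2)]] by blast
    then show ?thesis by (rule inj_lab[OF that(1,2) r])
  qed
  have far: "le x z" if i: "i + 2 \<le> n" and x: "x \<in> L i" and z: "z \<in> L (Suc (Suc i))" for i x z
  proof -
    have i1: "i < n" "Suc i < n" using i by auto
    obtain m where m: "m \<in> L (Suc i)" "\<not> le x m" "\<forall>y. y \<in> L (Suc i) \<and> \<not> le x y \<longrightarrow> y = m"
      using miss_x[OF i1(1) x] by blast
    let ?w = "ps (Suc i) z"
    have w: "?w \<in> L (Suc i)" "\<not> le ?w z" using ps[OF i1(2) z] by auto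
    have "card {m, ?w} \<le> 2" by (cases "m = ?w") auto
    moreover have "card (L (Suc i)) = 3" using cardL[of "Suc i"] i by simp
    moreover have "{m, ?w} \<subseteq> L (Suc i)" using m(1) w(1) by simp
    moreover have "card (L (Suc i) - {m, ?w}) = card (L (Suc i)) - card {m, ?w}"
      by (rule card_Diff_subset) (use m(1) w(1) in auto)
    ultimately have c1: "card (L (Suc i) - {m, ?w}) \<ge> 1" by linarith
    have "L (Suc i) - {m, ?w} \<noteq> {}"
    proof
      assume "L (Suc i) - {m, ?w} = {}"
      then have "card (L (Suc i) - {m, ?w}) = 0" by (simp only: card.empty)
      then show False using c1 by linarith
    qed
    then obtain u where u: "u \<in> L (Suc i)" "u \<noteq> m" "u \<noteq> ?w" by blast
    have xu: "le x u" using m(3) u by blast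
    have uz: "le u z"
    proof (rule ccontr)
      assume "\<not> le u z"
      then have "u = ?w" using ps_uniq[OF i1(2) z u(1)] by blast
      then show False using u by blast
    qed
    show ?thesis using posetD(3)[OF po, of x u z] xu uz x u z Lmem by blast
  qed
  have char: "le x y \<longleftrightarrow> x = y \<or> (r y = r x + 1 \<and> lab y \<noteq> lab x) \<or> r x + 2 \<le> r y"
    if x: "x \<in> B" and y: "y \<in> B" for x y
  proof -
    consider "r y < r x" | "r y = r x" | "r y = r x + 1" | "r x + 2 \<le> r y" by linarith
    then show ?thesis
    proof cases
      case 1
      have "\<not> le x y" using le_rank[OF g x y] 1 by auto
      then show ?thesis using 1 by auto
    next
      case 2
      have "le x y \<longleftrightarrow> x = y" using level_anti[OF g x y 2[symmetric]] posetD(1)[OF po x] by auto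
      then show ?thesis using 2 by auto
    next
      case 3
      let ?i = "r x"
      have i: "?i < n" using rn[OF y] 3 by simp
      have yL: "y \<in> L (Suc ?i)" and xL': "x \<in> L ?i" using x y 3 Lmem by auto
      have p: "ps ?i y \<in> L ?i" "\<not> le (ps ?i y) y" using ps[OF i yL] by auto
      have "le x y \<longleftrightarrow> x \<noteq> ps ?i y"
      proof
        assume "le x y"
        then show "x \<noteq> ps ?i y" using p(2) by auto
      next
        assume "x \<noteq> ps ?i y"
        then show "le x y" using ps_uniq[OF i yL xL'] by blast
      qed
      also have "\<dots> \<longleftrightarrow> lab y \<noteq> lab x"
      proof -
        have "lab y = labr l0 ps ?i (ps ?i y)" unfolding lab_def using 3 by simp
        moreover have "lab x = labr l0 ps ?i x" unfolding lab_def by simp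
        moreover have "inj_on (labr l0 ps ?i) (L ?i)" using bij_lab[of ?i] i unfolding bij_betw_def by simp
        ultimately show ?thesis using p(1) xL' unfolding inj_on_def by metis
      qed
      finally show ?thesis using 3 by auto
    next
      case 4
      obtain z where z: "z \<in> B" "r z = r x + 2" "le z y" using down_exists[OF po g y, of "r x + 2"] 4 by blast
      have "le x z" using far[of "r x" x z] rn[OF y] 4 x z Lmem by simp
      then have "le x y" using posetD(3)[OF po, of x z y] x y z by blast
      then show ?thesis using 4 by simp
    qed
  qed
  have iso: "le x y \<longleftrightarrow> le (sg x) (sg y)" if x: "x \<in> B" and y: "y \<in> B" for x y
  proof -
    have sx: "sg x \<in> B" "r (sg x) = r x" "lab (sg x) = (lab x + 1) mod 3" using sgfacts[OF x] by auto
    have sy: "sg y \<in> B" "r (sg y) = r y" "lab (sg y) = (lab y + 1) mod 3" using sgfacts[OF y] by auto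
    have e1: "sg x = sg y \<longleftrightarrow> x = y" using sg_inj[OF x y] by blast
    have e2: "lab (sg y) \<noteq> lab (sg x) \<longleftrightarrow> lab y \<noteq> lab x"
      using sx(3) sy(3) mod3_cancel[OF lab3[OF x] lab3[OF y]] by auto
    show ?thesis using char[OF x y] char[OF sx(1) sy(1)] e1 e2 sx(2) sy(2) by simp
  qed
  have sgB: "sg ` B \<subseteq> B" using sgfacts by blast
  have inj: "inj_on sg B" using sg_inj by (auto simp: inj_on_def)
  have bij: "bij_betw sg B B" using endo_inj_surj[OF fin sgB inj] inj unfolding bij_betw_def by blast
  have fp: "sg x \<noteq> x" if "x \<in> B" for x
  proof
    assume "sg x = x"
    then have "lab x = (lab x + 1) mod 3" using sgfacts[OF that] by simp
    then show False using mod3_ne[OF lab3[OF that]] by simp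
  qed
  show ?thesis using bij iso fp by blast
qed

lemma poset_sub: "poset_on Q le \<Longrightarrow> B \<subseteq> Q \<Longrightarrow> poset_on B le"
  unfolding poset_on_def by blast

lemma stack_auto:
  assumes fin: "finite B" and po: "poset_on B le" and st: "six_stack B le"
  shows "\<exists>f. bij_betw f B B \<and> (\<forall>x\<in>B. \<forall>y\<in>B. le x y \<longleftrightarrow> le (f x) (f y)) \<and> (\<forall>x\<in>B. f x \<noteq> x)"
proof -
  obtain n where n: "1 \<le> n" "ranked_of_rank B le n" "\<forall>i<n. order_iso (levels B le i (i + 1)) le C6 C6_le"
    using st unfolding six_stack_def by blast
  have g: "graded B le (rank_in B le) n" using G1[OF fin po n(2)] .
  have cr: "\<forall>i<n. crown_lv {p\<in>B. rank_in B le p = i} {p\<in>B. rank_in B le p = i+1} le"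
    using iso_crown[OF fin po g] n(3) by blast
  show ?thesis using crown_stack_auto[OF fin po g n(1) cr] .
qed

lemma anti2_auto:
  assumes po: "poset_on B le" and t: "two_antichain B le"
  shows "\<exists>f. bij_betw f B B \<and> (\<forall>x\<in>B. \<forall>y\<in>B. le x y \<longleftrightarrow> le (f x) (f y)) \<and> (\<forall>x\<in>B. f x \<noteq> x)"
proof -
  obtain a b where ab: "B = {a, b}" "a \<noteq> b" using t unfolding two_antichain_def card_2_iff by blast
  have anti: "\<forall>x\<in>B. \<forall>y\<in>B. le x y \<longrightarrow> x = y" using t unfolding two_antichain_def antichain_in_def by blast
  have refl: "\<forall>x\<in>B. le x x" using po unfolding poset_on_def by blast
  have l: "le a a" "le b b" "\<not> le a b" "\<not> le b a" using anti refl ab by auto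
  define f where "f x = (if x = a then b else a)" for x
  have fa: "f a = b" "f b = a" unfolding f_def using ab(2) by auto
  have "f ` B = B" using fa ab(1) by auto
  moreover have "inj_on f B" unfolding inj_on_def using fa ab by auto
  moreover have "\<forall>x\<in>B. \<forall>y\<in>B. le x y \<longleftrightarrow> le (f x) (f y)"
    unfolding ab(1) using fa l by auto
  moreover have "\<forall>x\<in>B. f x \<noteq> x" using fa ab by auto
  ultimately show ?thesis unfolding bij_betw_def by blast
qed

lemma tower_auto:
  assumes fin: "finite Q" and po: "poset_on Q le" and tw: "six_tower Q le"
  shows "automorphic Q le"
proof -
  obtain Bs where Bs: "Bs \<noteq> []" "\<Union>(set Bs) = Q"
      "\<forall>i<length Bs. \<forall>j<length Bs. i \<noteq> j \<longrightarrow> Bs ! i \<inter> Bs ! j = {}"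
      "\<forall>i<length Bs. two_antichain (Bs ! i) le \<or> six_stack (Bs ! i) le"
      "\<forall>i<length Bs. \<forall>j<length Bs. i < j \<longrightarrow> (\<forall>x\<in>Bs ! i. \<forall>y\<in>Bs ! j. strict le x y)"
    using tw unfolding six_tower_def by blast
  have sub: "Bs ! i \<subseteq> Q" if "i < length Bs" for i using Bs(2) that by auto
  have ex: "\<forall>i. \<exists>f. i < length Bs \<longrightarrow> bij_betw f (Bs ! i) (Bs ! i) \<and>
      (\<forall>x\<in>Bs ! i. \<forall>y\<in>Bs ! i. le x y \<longleftrightarrow> le (f x) (f y)) \<and> (\<forall>x\<in>Bs ! i. f x \<noteq> x)"
  proof
    fix i
    show "\<exists>f. i < length Bs \<longrightarrow> bij_betw f (Bs ! i) (Bs ! i) \<and>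
      (\<forall>x\<in>Bs ! i. \<forall>y\<in>Bs ! i. le x y \<longleftrightarrow> le (f x) (f y)) \<and> (\<forall>x\<in>Bs ! i. f x \<noteq> x)"
    proof (cases "i < length Bs")
      case True
      have poi: "poset_on (Bs ! i) le" using poset_sub[OF po sub[OF True]] .
      have fini: "finite (Bs ! i)" using finite_subset[OF sub[OF True] fin] .
      from Bs(4) True show ?thesis
        using anti2_auto[OF poi] stack_auto[OF fini poi] by blast
    qed simp
  qed
  obtain F where F: "\<forall>i<length Bs. bij_betw (F i) (Bs ! i) (Bs ! i) \<and>
      (\<forall>x\<in>Bs ! i. \<forall>y\<in>Bs ! i. le x y \<longleftrightarrow> le (F i x) (F i y)) \<and> (\<forall>x\<in>Bs ! i. F i x \<noteq> x)"
    using choice[OF ex] by blast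
  define idx where "idx x = (THE i. i < length Bs \<and> x \<in> Bs ! i)" for x
  have idx: "idx x < length Bs \<and> x \<in> Bs ! (idx x)" if x: "x \<in> Q" for x
  proof -
    obtain i where i: "i < length Bs" "x \<in> Bs ! i" using x Bs(2) by (metis UnionE in_set_conv_nth)
    have "\<exists>!i. i < length Bs \<and> x \<in> Bs ! i"
    proof (rule ex1I[of _ i])
      show "i < length Bs \<and> x \<in> Bs ! i" using i by blast
      fix j assume j: "j < length Bs \<and> x \<in> Bs ! j"
      show "j = i"
      proof (rule ccontr)
        assume "j \<noteq> i"
        then have "Bs ! j \<inter> Bs ! i = {}" using Bs(3) i j by blast
        then show False using i j by blast
      qed
    qed
    then show ?thesis unfolding idx_def by (rule theI')
  qed
  have idx_eq: "idx x = i" if "x \<in> Bs ! i" "i < length Bs" for x i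
  proof -
    have xQ: "x \<in> Q" using sub that by blast
    show ?thesis
    proof (rule ccontr)
      assume "idx x \<noteq> i"
      then have "Bs ! (idx x) \<inter> Bs ! i = {}" using Bs(3) idx[OF xQ] that by blast
      then show False using idx[OF xQ] that by blast
    qed
  qed
  define sg where "sg x = F (idx x) x" for x
  have sgin: "sg x \<in> Bs ! (idx x)" if x: "x \<in> Q" for x
    using F idx[OF x] unfolding sg_def by (meson bij_betwE)
  have sgidx: "idx (sg x) = idx x" if x: "x \<in> Q" for x
    using idx_eq[OF sgin[OF x]] idx[OF x] by blast
  have sgQ: "sg ` Q \<subseteq> Q" using sgin sub idx by blast
  have inj: "inj_on sg Q"
  proof (rule inj_onI)
    fix x y assume x: "x \<in> Q" and y: "y \<in> Q" and e: "sg x = sg y"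
    have "idx x = idx y" using sgidx[OF x] sgidx[OF y] e by simp
    then have "F (idx x) x = F (idx x) y" using e unfolding sg_def by simp
    moreover have "inj_on (F (idx x)) (Bs ! idx x)" using F idx[OF x] unfolding bij_betw_def by blast
    ultimately show "x = y" using idx[OF x] idx[OF y] \<open>idx x = idx y\<close> by (metis inj_onD)
  qed
  have bij: "bij_betw sg Q Q" using endo_inj_surj[OF fin sgQ inj] inj unfolding bij_betw_def by blast
  have notle: "\<not> le y x" if "strict le x y" "x \<in> Q" "y \<in> Q" for x y
    using that po unfolding poset_on_def strict_def by blast
  have iso: "le x y \<longleftrightarrow> le (sg x) (sg y)" if x: "x \<in> Q" and y: "y \<in> Q" for x y
  proof -
    have ix: "idx x < length Bs" "x \<in> Bs ! idx x" and iy: "idx y < length Bs" "y \<in> Bs ! idx y"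
      using idx[OF x] idx[OF y] by auto
    have sx: "sg x \<in> Bs ! idx x" "sg x \<in> Q" and sy: "sg y \<in> Bs ! idx y" "sg y \<in> Q"
      using sgin[OF x] sgin[OF y] sgQ x y by auto
    consider "idx x = idx y" | "idx x < idx y" | "idx y < idx x" by linarith
    then show ?thesis
    proof cases
      case 1
      then show ?thesis using F ix iy unfolding sg_def by auto
    next
      case 2
      have "strict le x y" "strict le (sg x) (sg y)" using Bs(5) ix iy sx sy 2 by blast+
      then show ?thesis unfolding strict_def by blast
    next
      case 3
      have "strict le y x" "strict le (sg y) (sg x)" using Bs(5) ix iy sx sy 3 by blast+
      then show ?thesis using notle x y sx(2) sy(2) by blast
    qed
  qed
  have fp: "sg x \<noteq> x" if x: "x \<in> Q" for x using F idx[OF x] unfolding sg_def by blast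
  show ?thesis unfolding automorphic_def using bij iso fp by blast
qed

definition autom :: "'a set \<Rightarrow> ('a \<Rightarrow> 'a \<Rightarrow> bool) \<Rightarrow> ('a \<Rightarrow> 'a) \<Rightarrow> bool" where
  "autom P le s \<longleftrightarrow> bij_betw s P P \<and> (\<forall>x\<in>P. \<forall>y\<in>P. le x y \<longleftrightarrow> le (s x) (s y)) \<and> (\<forall>x\<in>P. s x \<noteq> x)"

definition minim :: "'a set \<Rightarrow> ('a \<Rightarrow> 'a \<Rightarrow> bool) \<Rightarrow> bool" where
  "minim P le \<longleftrightarrow> (\<forall>Q. retract_of Q P le \<and> Q \<noteq> P \<longrightarrow> \<not> automorphic Q le)"

lemma automD:
  assumes "autom P le s"
  shows "x \<in> P \<Longrightarrow> s x \<in> P" "x \<in> P \<Longrightarrow> y \<in> P \<Longrightarrow> le x y \<longleftrightarrow> le (s x) (s y)"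
    "x \<in> P \<Longrightarrow> s x \<noteq> x" "x \<in> P \<Longrightarrow> y \<in> P \<Longrightarrow> s x = s y \<Longrightarrow> x = y"
    "y \<in> P \<Longrightarrow> \<exists>x\<in>P. s x = y" "inj_on s P" "s ` P = P"
proof -
  have b: "bij_betw s P P" and i: "\<forall>x\<in>P. \<forall>y\<in>P. le x y \<longleftrightarrow> le (s x) (s y)" and f: "\<forall>x\<in>P. s x \<noteq> x"
    using assms unfolding autom_def by auto
  show "x \<in> P \<Longrightarrow> s x \<in> P" using bij_betwE[OF b] by blast
  show "x \<in> P \<Longrightarrow> y \<in> P \<Longrightarrow> le x y \<longleftrightarrow> le (s x) (s y)" using i by blast
  show "x \<in> P \<Longrightarrow> s x \<noteq> x" using f by blast
  show "inj_on s P" using b unfolding bij_betw_def by blast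
  then show "x \<in> P \<Longrightarrow> y \<in> P \<Longrightarrow> s x = s y \<Longrightarrow> x = y" by (rule inj_onD)
  show "s ` P = P" using b unfolding bij_betw_def by blast
  then show "y \<in> P \<Longrightarrow> \<exists>x\<in>P. s x = y" by (metis imageE)
qed

lemma autom_strict:
  assumes "autom P le s" "x \<in> P" "y \<in> P"
  shows "strict le x y \<longleftrightarrow> strict le (s x) (s y)"
  using automD(2,4)[OF assms(1)] assms(2,3) unfolding strict_def by blast

lemma minimD: "minim P le \<Longrightarrow> retract_of Q P le \<Longrightarrow> Q \<noteq> P \<Longrightarrow> autom Q le s \<Longrightarrow> False"
  unfolding minim_def automorphic_def autom_def by blast

lemma autom_rank:
  assumes fin: "finite P" and po: "poset_on P le" and g: "graded P le (rank_in P le) n"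
    and s: "autom P le s" and x: "x \<in> P"
  shows "rank_in P le (s x) = rank_in P le x"
proof -
  let ?r = "rank_in P le"
  have mono: "monoR P le (\<lambda>p. ?r (s p))" unfolding monoR_def
  proof (intro ballI impI)
    fix x y assume "x \<in> P" "y \<in> P" "strict le x y"
    then show "?r (s x) < ?r (s y)" using gradedD(2)[OF g] automD(1)[OF s] autom_strict[OF s] by blast
  qed
  have down: "downR P le (\<lambda>p. ?r (s p))" unfolding downR_def
  proof (intro ballI impI)
    fix p assume p: "p \<in> P" "0 < ?r (s p)"
    obtain q' where q': "q' \<in> P" "strict le q' (s p)" "?r q' + 1 = ?r (s p)"
      using gradedD(3)[OF g automD(1)[OF s p(1)] p(2)] by blast
    obtain q where q: "q \<in> P" "s q = q'" using automD(5)[OF s q'(1)] by blast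
    have "strict le q p" using autom_strict[OF s q(1) p(1)] q q' by simp
    then show "\<exists>q\<in>P. strict le q p \<and> ?r (s q) + 1 = ?r (s p)" using q q' by blast
  qed
  show ?thesis using rank_char[OF fin po mono down x] by simp
qed

lemma no_unique_lower:
  assumes fin: "finite P" and po: "poset_on P le" and mono: "monoR P le r"
    and stepd: "\<forall>x\<in>P. \<forall>y\<in>P. strict le x y \<longrightarrow> (\<exists>z\<in>P. r z + 1 = r y \<and> le x z \<and> strict le z y)"
    and s: "autom P le s" and rs: "\<forall>x\<in>P. r (s x) = r x" and mi: "minim P le"
    and b: "b \<in> P" and a: "a \<in> P" "strict le a b" "r a + 1 = r b"
    and uniq: "\<forall>a'\<in>P. strict le a' b \<and> r a' + 1 = r b \<longrightarrow> a' = a"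
  shows False
proof -
  define U where "U x \<longleftrightarrow> (\<exists>!a. a \<in> P \<and> strict le a x \<and> r a + 1 = r x)" for x
  define Ob where "Ob = {x\<in>P. r x = r b \<and> U x}"
  define lc where "lc x = (THE a. a \<in> P \<and> strict le a x \<and> r a + 1 = r x)" for x
  have ex1: "\<exists>!a. a \<in> P \<and> strict le a x \<and> r a + 1 = r x" if "x \<in> Ob" for x
    using that unfolding Ob_def U_def by blast
  have lcp: "lc x \<in> P \<and> strict le (lc x) x \<and> r (lc x) + 1 = r x" if "x \<in> Ob" for x
    unfolding lc_def by (rule theI'[OF ex1[OF that]])
  have lcu: "a' = lc x" if "x \<in> Ob" "a' \<in> P" "strict le a' x" "r a' + 1 = r x" for x a'
    unfolding lc_def using the1_equality[OF ex1[OF that(1)]] that(2-4) by simp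
  define f where "f x = (if x \<in> Ob then lc x else x)" for x
  define Q where "Q = P - Ob"
  have OP: "Ob \<subseteq> P" unfolding Ob_def by blast
  have ret: "retract_of Q P le" unfolding retract_of_def
  proof (intro conjI exI[of _ f])
    show "Q \<subseteq> P" unfolding Q_def by blast
    show "f ` P \<subseteq> Q"
    proof
      fix y assume "y \<in> f ` P"
      then obtain x where x: "x \<in> P" "y = f x" by blast
      show "y \<in> Q"
      proof (cases "x \<in> Ob")
        case True
        then have "lc x \<in> P" "r (lc x) + 1 = r b" using lcp[OF True] unfolding Ob_def by auto
        then have "lc x \<notin> Ob" unfolding Ob_def by auto
        then show ?thesis using x True \<open>lc x \<in> P\<close> unfolding f_def Q_def by simp
      next
        case False
        then show ?thesis using x unfolding f_def Q_def by simp
      qed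
    qed
    show "\<forall>q\<in>Q. f q = q" unfolding Q_def f_def by simp
    show "\<forall>x\<in>P. \<forall>y\<in>P. le x y \<longrightarrow> le (f x) (f y)"
    proof (intro ballI impI)
      fix x y assume x: "x \<in> P" and y: "y \<in> P" and xy: "le x y"
      show "le (f x) (f y)"
      proof (cases "x \<in> Ob")
        case xO: True
        note lx = lcp[OF xO]
        show ?thesis
        proof (cases "y \<in> Ob")
          case True
          have rxy: "r x = r y" using xO True unfolding Ob_def by simp
          have "x = y"
          proof (rule ccontr)
            assume "x \<noteq> y"
            then have "strict le x y" using xy by (simp add: strict_def)
            then have "r x < r y" using mono x y unfolding monoR_def by blast
            then show False using rxy by simp
          qed
          then show ?thesis using posetD(1)[OF po, of "lc x"] lx xO unfolding f_def by simp
        next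
          case False
          have "le (lc x) y" using posetD(3)[OF po, of "lc x" x y] lx x y xy by (auto simp: strict_def)
          then show ?thesis using xO False unfolding f_def by simp
        qed
      next
        case xO: False
        show ?thesis
        proof (cases "y \<in> Ob")
          case True
          have "x \<noteq> y" using xO True by blast
          then have "strict le x y" using xy by (simp add: strict_def)
          then obtain z where z: "z \<in> P" "r z + 1 = r y" "le x z" "strict le z y" using stepd x y by blast
          have "z = lc y" using lcu[OF True z(1) z(4) z(2)] .
          then show ?thesis using z xO True unfolding f_def by simp
        next
          case False
          then show ?thesis using xO xy unfolding f_def by simp
        qed
      qed
    qed
  qed
  have sO: "s x \<in> Ob" if x: "x \<in> Ob" for x
  proof -
    have xP: "x \<in> P" using x OP by blast
    note lx = lcp[OF x]
    have sxP: "s x \<in> P" using automD(1)[OF s xP] .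
    have r1: "r (s x) = r b" using rs xP x unfolding Ob_def by simp
    have lP: "lc x \<in> P" using lx by blast
    have ex: "s (lc x) \<in> P \<and> strict le (s (lc x)) (s x) \<and> r (s (lc x)) + 1 = r (s x)"
    proof (intro conjI)
      show "s (lc x) \<in> P" using automD(1)[OF s lP] .
      show "strict le (s (lc x)) (s x)" using autom_strict[OF s lP xP] lx by blast
      have "r (s (lc x)) = r (lc x)" "r (s x) = r x" using rs lP xP by auto
      then show "r (s (lc x)) + 1 = r (s x)" using lx by simp
    qed
    have un: "a' = s (lc x)" if a': "a' \<in> P" "strict le a' (s x)" "r a' + 1 = r (s x)" for a'
    proof -
      obtain a'' where a'': "a'' \<in> P" "s a'' = a'" using automD(5)[OF s a'(1)] by blast
      have "strict le a'' x" using autom_strict[OF s a''(1) xP] a'' a' by simp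
      moreover have "r a'' + 1 = r x"
      proof -
        have "r (s a'') = r a''" "r (s x) = r x" using rs a''(1) xP by auto
        then show ?thesis using a''(2) a'(3) by simp
      qed
      ultimately have "a'' = lc x" using lcu[OF x a''(1)] by blast
      then show ?thesis using a'' by simp
    qed
    have "U (s x)" unfolding U_def using ex un by blast
    then show ?thesis unfolding Ob_def using sxP r1 by blast
  qed
  have finO: "finite Ob" using finite_subset[OF OP fin] .
  have injO: "inj_on s Ob" using inj_on_subset[OF automD(6)[OF s] OP] .
  have sOO: "s ` Ob = Ob" using endo_inj_surj[OF finO _ injO] sO by blast
  have sQ: "s ` Q = Q" unfolding Q_def
    using inj_on_image_set_diff[OF automD(6)[OF s], of P Ob] OP automD(7)[OF s] sOO by simp
  have injQ: "inj_on s Q" using inj_on_subset[OF automD(6)[OF s]] unfolding Q_def by blast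
  have QP: "Q \<subseteq> P" unfolding Q_def by blast
  have "autom Q le s" unfolding autom_def bij_betw_def
  proof (intro conjI ballI)
    show "inj_on s Q" by (rule injQ)
    show "s ` Q = Q" by (rule sQ)
    fix x assume x: "x \<in> Q"
    then show "s x \<noteq> x" using automD(3)[OF s] QP by blast
    fix y assume y: "y \<in> Q"
    show "le x y \<longleftrightarrow> le (s x) (s y)" using automD(2)[OF s, of x y] x y QP by blast
  qed
  moreover have "Q \<noteq> P"
  proof -
    have "U b" unfolding U_def
    proof (rule ex1I[of _ a])
      show "a \<in> P \<and> strict le a b \<and> r a + 1 = r b" using a by blast
    next
      fix a' assume "a' \<in> P \<and> strict le a' b \<and> r a' + 1 = r b"
      then show "a' = a" using uniq by blast
    qed
    then have "b \<in> Ob" unfolding Ob_def using b by blast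
    then show ?thesis unfolding Q_def using b by blast
  qed
  ultimately show False using minimD[OF mi ret] by blast
qed

lemma flip_poset: "poset_on P le \<Longrightarrow> poset_on P (\<lambda>x y. le y x)"
  unfolding poset_on_def by blast

lemma strict_flip: "strict (\<lambda>x y. le y x) x y = strict le y x"
  unfolding strict_def by auto

lemma autom_flip: "autom P (\<lambda>x y. le y x) s = autom P le s"
  unfolding autom_def by blast

lemma retract_flip: "retract_of Q P (\<lambda>x y. le y x) = retract_of Q P le"
proof
  assume "retract_of Q P (\<lambda>x y. le y x)"
  then obtain f where f: "Q \<subseteq> P" "f ` P \<subseteq> Q" "\<forall>x\<in>P. \<forall>y\<in>P. le y x \<longrightarrow> le (f y) (f x)" "\<forall>q\<in>Q. f q = q"
    unfolding retract_of_def by blast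
  have "\<forall>x\<in>P. \<forall>y\<in>P. le x y \<longrightarrow> le (f x) (f y)" using f(3) by blast
  then show "retract_of Q P le" unfolding retract_of_def using f(1,2,4) by blast
next
  assume "retract_of Q P le"
  then obtain f where f: "Q \<subseteq> P" "f ` P \<subseteq> Q" "\<forall>x\<in>P. \<forall>y\<in>P. le x y \<longrightarrow> le (f x) (f y)" "\<forall>q\<in>Q. f q = q"
    unfolding retract_of_def by blast
  have "\<forall>x\<in>P. \<forall>y\<in>P. le y x \<longrightarrow> le (f y) (f x)" using f(3) by blast
  then show "retract_of Q P (\<lambda>x y. le y x)" unfolding retract_of_def using f(1,2,4) by blast
qed

lemma automorphic_flip: "automorphic Q (\<lambda>x y. le y x) = automorphic Q le"
  unfolding automorphic_def by blast

lemma minim_flip: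
  assumes "minim P le" shows "minim P (\<lambda>x y. le y x)"
  unfolding minim_def
proof (intro allI impI)
  fix Q assume "retract_of Q P (\<lambda>x y. le y x) \<and> Q \<noteq> P"
  then have "retract_of Q P le \<and> Q \<noteq> P" using retract_flip[of Q P le] by simp
  then have "\<not> automorphic Q le" using assms unfolding minim_def by blast
  then show "\<not> automorphic Q (\<lambda>x y. le y x)" using automorphic_flip[of Q le] by simp
qed

lemma lower2:
  assumes fin: "finite P" and po: "poset_on P le" and g: "graded P le r n"
    and s: "autom P le s" and rs: "\<forall>x\<in>P. r (s x) = r x" and mi: "minim P le"
    and p: "p \<in> P" "0 < r p"
  shows "\<exists>a1\<in>P. \<exists>a2\<in>P. a1 \<noteq> a2 \<and> strict le a1 p \<and> strict le a2 p \<and> r a1 + 1 = r p \<and> r a2 + 1 = r p"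
proof (rule ccontr)
  assume nt: "\<not> ?thesis"
  obtain a where a: "a \<in> P" "strict le a p" "r a + 1 = r p" using gradedD(3)[OF g p] by blast
  have uniq: "\<forall>a'\<in>P. strict le a' p \<and> r a' + 1 = r p \<longrightarrow> a' = a" using nt a by blast
  have stepd: "\<forall>x\<in>P. \<forall>y\<in>P. strict le x y \<longrightarrow> (\<exists>z\<in>P. r z + 1 = r y \<and> le x z \<and> strict le z y)"
    using step_down[OF po g] by blast
  show False using no_unique_lower[OF fin po gradedD(6)[OF g] stepd s rs mi p(1) a uniq] .
qed

lemma upper2:
  assumes fin: "finite P" and po: "poset_on P le" and g: "graded P le r n"
    and s: "autom P le s" and rs: "\<forall>x\<in>P. r (s x) = r x" and mi: "minim P le"
    and p: "p \<in> P" "r p < n"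
  shows "\<exists>b1\<in>P. \<exists>b2\<in>P. b1 \<noteq> b2 \<and> strict le p b1 \<and> strict le p b2 \<and> r b1 = r p + 1 \<and> r b2 = r p + 1"
proof (rule ccontr)
  assume nt: "\<not> ?thesis"
  define le' where "le' = (\<lambda>x y. le y x)"
  define r' where "r' = (\<lambda>x. n - r x)"
  have sf: "strict le' x y \<longleftrightarrow> strict le y x" for x y unfolding le'_def strict_def by auto
  obtain b where b: "b \<in> P" "strict le p b" "r b = r p + 1" using gradedD(4)[OF g p] by blast
  have rn: "r x \<le> n" if "x \<in> P" for x using gradedD(1)[OF g that] .
  have mono: "monoR P le' r'" unfolding monoR_def
  proof (intro ballI impI)
    fix x y assume xy: "x \<in> P" "y \<in> P" "strict le' x y"
    have "strict le y x" using xy(3) sf by blast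
    then have "r y < r x" "r x \<le> n" using gradedD(2)[OF g xy(2) xy(1)] rn[OF xy(1)] by auto
    then show "r' x < r' y" unfolding r'_def by simp
  qed
  have stepd: "\<forall>x\<in>P. \<forall>y\<in>P. strict le' x y \<longrightarrow> (\<exists>z\<in>P. r' z + 1 = r' y \<and> le' x z \<and> strict le' z y)"
  proof (intro ballI impI)
    fix x y assume x: "x \<in> P" and y: "y \<in> P" and yx': "strict le' x y"
    have yx: "strict le y x" using yx' sf by blast
    obtain z where z: "z \<in> P" "r z = r y + 1" "strict le y z" "le z x" using step_up[OF po g y x yx] by blast
    have "r z \<le> n" using rn z(1) .
    then have "r' z + 1 = r' y" using z(2) unfolding r'_def by simp
    moreover have "le' x z" using z(4) unfolding le'_def by simp
    moreover have "strict le' z y" using z(3) sf by blast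
    ultimately show "\<exists>z\<in>P. r' z + 1 = r' y \<and> le' x z \<and> strict le' z y" using z(1) by blast
  qed
  have po': "poset_on P le'" unfolding le'_def by (rule flip_poset[OF po])
  have s': "autom P le' s" unfolding le'_def using s autom_flip[of P le s] by simp
  have mi': "minim P le'" unfolding le'_def by (rule minim_flip[OF mi])
  have rs': "\<forall>x\<in>P. r' (s x) = r' x" using rs unfolding r'_def by simp
  have b1: "strict le' b p" using b(2) sf by blast
  have b2: "r' b + 1 = r' p" using b(3) rn[OF b(1)] unfolding r'_def by simp
  have uniq: "\<forall>a'\<in>P. strict le' a' p \<and> r' a' + 1 = r' p \<longrightarrow> a' = b"
  proof (intro ballI impI)
    fix a' assume a': "a' \<in> P" "strict le' a' p \<and> r' a' + 1 = r' p"
    have pa: "strict le p a'" using a'(2) sf by blast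
    have "r a' \<le> n" using rn a'(1) .
    then have ra: "r a' = r p + 1" using a'(2) p(2) unfolding r'_def by linarith
    show "a' = b"
    proof (rule ccontr)
      assume ne: "a' \<noteq> b"
      have "\<exists>b1\<in>P. \<exists>b2\<in>P. b1 \<noteq> b2 \<and> strict le p b1 \<and> strict le p b2 \<and> r b1 = r p + 1 \<and> r b2 = r p + 1"
        by (intro bexI[of _ a'] bexI[of _ b] conjI) (use a'(1) pa b ra ne in auto)
      then show False using nt by blast
    qed
  qed
  show False
    by (rule no_unique_lower[OF fin po' mono stepd s' rs' mi' p(1) b(1) b1 b2 uniq])
qed

definition compl :: "'a set \<Rightarrow> ('a \<Rightarrow> 'a \<Rightarrow> bool) \<Rightarrow> ('a \<Rightarrow> nat) \<Rightarrow> nat \<Rightarrow> bool" where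
  "compl P le r k \<longleftrightarrow> (\<forall>x\<in>P. \<forall>y\<in>P. r x = k \<longrightarrow> r y = Suc k \<longrightarrow> le x y)"

lemma comp_lt:
  assumes po: "poset_on P le" and g: "graded P le r n" and c: "compl P le r t"
    and x: "x \<in> P" and y: "y \<in> P" and rx: "r x \<le> t" and ry: "Suc t \<le> r y"
  shows "strict le x y"
proof -
  have tn: "t \<le> n" using gradedD(1)[OF g y] ry by simp
  obtain u where u: "u \<in> P" "r u = t" "le x u" using up_exists[OF po g x rx tn] by blast
  obtain w where w: "w \<in> P" "r w = Suc t" "le w y" using down_exists[OF po g y ry] by blast
  have "le u w" using c u w unfolding compl_def by blast
  then have "le x w" using posetD(3)[OF po, of x u w] x u w by blast
  then have "le x y" using posetD(3)[OF po, of x w y] x w y by blast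
  moreover have "x \<noteq> y" using rx ry by auto
  ultimately show ?thesis by (simp add: strict_def)
qed

lemma fpf3:
  assumes fin: "finite L" and c: "card L = 3" and S: "S \<subseteq> L" and fL: "\<forall>x\<in>L. f x \<in> L"
    and inv: "\<forall>x\<in>L. (f x \<in> S \<longleftrightarrow> x \<in> S)" and fp: "\<forall>x\<in>L. f x \<noteq> x"
  shows "S = {} \<or> S = L"
proof -
  have finS: "finite S" using finite_subset[OF S fin] .
  have "card S \<le> 3" using card_mono[OF fin S] c by simp
  then consider "card S = 0" | "card S = 1" | "card S = 2" | "card S = 3" by linarith
  then show ?thesis
  proof cases
    case 1 then show ?thesis using finS by simp
  next
    case 2
    then obtain t where t: "S = {t}" using card_1_singletonE by blast
    then have "t \<in> L" using S by blast
    then have "f t \<in> S" using inv t by blast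
    then have "f t = t" using t by blast
    then show ?thesis using fp \<open>t \<in> L\<close> by blast
  next
    case 3
    have "card (L - S) = 1" using card_Diff_subset[OF finS S] c 3 by simp
    then obtain t where t: "L - S = {t}" using card_1_singletonE by blast
    then have tL: "t \<in> L" "t \<notin> S" by blast+
    then have "f t \<in> L" "f t \<notin> S" using fL inv by blast+
    then have "f t \<in> L - S" by blast
    then have "f t = t" using t by blast
    then show ?thesis using fp tL by blast
  next
    case 4
    then have "S = L" using card_subset_eq[OF fin S] c by simp
    then show ?thesis by blast
  qed
qed

lemma four_in_three:
  assumes fin: "finite A" and c: "card A = 3" and sub: "p \<in> A" "q \<in> A" "u \<in> A" "v \<in> A"
    and d: "p \<noteq> q" "p \<noteq> u" "p \<noteq> v" "q \<noteq> u" "q \<noteq> v" "u \<noteq> v"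
  shows False
proof -
  have "card {p, q, u, v} = 4" using d by simp
  moreover have "{p, q, u, v} \<subseteq> A" using sub by blast
  ultimately have "4 \<le> card A" using card_mono[OF fin] by metis
  then show False using c by simp
qed

lemma crown_iso:
  assumes cr: "crown_lv A B le"
    and antiA: "\<forall>x\<in>A. \<forall>y\<in>A. le x y \<longleftrightarrow> x = y" and antiB: "\<forall>x\<in>B. \<forall>y\<in>B. le x y \<longleftrightarrow> x = y"
    and noBA: "\<forall>x\<in>A. \<forall>y\<in>B. \<not> le y x"
  shows "order_iso (A \<union> B) le C6 C6_le"
proof -
  have cA: "card A = 3" and cB: "card B = 3" and mx: "\<forall>x\<in>A. \<exists>!y. y \<in> B \<and> \<not> le x y"
    and my: "\<forall>y\<in>B. \<exists>!x. x \<in> A \<and> \<not> le x y" using cr unfolding crown_lv_def by blast+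
  obtain x0 x1 x2 where xs: "A = {x0, x1, x2}" "x0 \<noteq> x1" "x1 \<noteq> x2" "x0 \<noteq> x2"
    using cA unfolding card_3_iff by blast
  define m where "m x = (THE y. y \<in> B \<and> \<not> le x y)" for x
  have mp: "m x \<in> B \<and> \<not> le x (m x)" if "x \<in> A" for x
    unfolding m_def by (rule theI'[OF mx[rule_format, OF that]])
  have mu: "y = m x" if "x \<in> A" "y \<in> B" "\<not> le x y" for x y
    using mx[rule_format, OF that(1)] mp[OF that(1)] that(2,3) by blast
  have minj: "x = x'" if "x \<in> A" "x' \<in> A" "m x = m x'" for x x'
  proof -
    have "m x \<in> B" "\<not> le x (m x)" "\<not> le x' (m x)" using mp[OF that(1)] mp[OF that(2)] that(3) by auto
    then show ?thesis using my that(1,2) by blast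
  qed
  have x0A: "x0 \<in> A" and x1A: "x1 \<in> A" and x2A: "x2 \<in> A" using xs by auto
  define y0 where "y0 = m x0"
  define y1 where "y1 = m x1"
  define y2 where "y2 = m x2"
  have yB: "y0 \<in> B" "y1 \<in> B" "y2 \<in> B" using mp x0A x1A x2A unfolding y0_def y1_def y2_def by auto
  have yd: "y0 \<noteq> y1" "y1 \<noteq> y2" "y0 \<noteq> y2"
    using minj[OF x0A x1A] minj[OF x1A x2A] minj[OF x0A x2A] xs(2-4) unfolding y0_def y1_def y2_def by auto
  have Beq: "B = {y0, y1, y2}"
  proof -
    have sub: "{y0, y1, y2} \<subseteq> B" using yB by auto
    have "card {y0, y1, y2} = 3" using yd by simp
    moreover have "finite B" using cB card.infinite by fastforce
    ultimately show ?thesis using card_subset_eq[OF _ sub] cB by simp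
  qed
  have nl: "\<not> le x0 y0" "\<not> le x1 y1" "\<not> le x2 y2" using mp x0A x1A x2A unfolding y0_def y1_def y2_def by auto
  have yl: "le x0 y1" "le x0 y2" "le x1 y0" "le x1 y2" "le x2 y0" "le x2 y1"
  proof -
    have "y1 \<noteq> m x0" "y2 \<noteq> m x0" "y0 \<noteq> m x1" "y2 \<noteq> m x1" "y0 \<noteq> m x2" "y1 \<noteq> m x2"
      using yd unfolding y0_def y1_def y2_def by auto
    then show "le x0 y1" "le x0 y2" "le x1 y0" "le x1 y2" "le x2 y0" "le x2 y1"
      using mu[OF x0A yB(2)] mu[OF x0A yB(3)] mu[OF x1A yB(1)] mu[OF x1A yB(3)] mu[OF x2A yB(1)] mu[OF x2A yB(2)]
      by blast+
  qed
  have aA: "le x y \<longleftrightarrow> x = y" if "x \<in> A" "y \<in> A" for x y using antiA that by blast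
  have aB: "le x y \<longleftrightarrow> x = y" if "x \<in> B" "y \<in> B" for x y using antiB that by blast
  have nBA: "\<not> le y x" if "x \<in> A" "y \<in> B" for x y using noBA that by blast
  have xl: "le x0 x0" "le x1 x1" "le x2 x2" "\<not> le x0 x1" "\<not> le x0 x2" "\<not> le x1 x0" "\<not> le x1 x2" "\<not> le x2 x0" "\<not> le x2 x1"
    using aA[OF x0A x0A] aA[OF x0A x1A] aA[OF x0A x2A] aA[OF x1A x0A] aA[OF x1A x1A] aA[OF x1A x2A] aA[OF x2A x0A] aA[OF x2A x1A] aA[OF x2A x2A] xs(2-4) by simp_all
  have yy: "le y0 y0" "le y1 y1" "le y2 y2" "\<not> le y0 y1" "\<not> le y0 y2" "\<not> le y1 y0" "\<not> le y1 y2" "\<not> le y2 y0" "\<not> le y2 y1"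
    using aB[OF yB(1) yB(1)] aB[OF yB(1) yB(2)] aB[OF yB(1) yB(3)] aB[OF yB(2) yB(1)] aB[OF yB(2) yB(2)] aB[OF yB(2) yB(3)] aB[OF yB(3) yB(1)] aB[OF yB(3) yB(2)] aB[OF yB(3) yB(3)] yd by simp_all
  have yx: "\<not> le y0 x0" "\<not> le y0 x1" "\<not> le y0 x2" "\<not> le y1 x0" "\<not> le y1 x1" "\<not> le y1 x2" "\<not> le y2 x0" "\<not> le y2 x1" "\<not> le y2 x2"
    using nBA[OF x0A yB(1)] nBA[OF x0A yB(2)] nBA[OF x0A yB(3)] nBA[OF x1A yB(1)] nBA[OF x1A yB(2)] nBA[OF x1A yB(3)] nBA[OF x2A yB(1)] nBA[OF x2A yB(2)] nBA[OF x2A yB(3)] by simp_all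
  have xy: "x0 \<noteq> y0" "x0 \<noteq> y1" "x0 \<noteq> y2" "x1 \<noteq> y0" "x1 \<noteq> y1" "x1 \<noteq> y2" "x2 \<noteq> y0" "x2 \<noteq> y1" "x2 \<noteq> y2"
    using xl(1-3) yx by metis+
  define f where "f z = (if z = x0 then 0 else if z = x1 then 1 else if z = x2 then 2 else
      if z = y0 then 4 else if z = y1 then 5 else (3::nat))" for z
  have fv: "f x0 = 0" "f x1 = 1" "f x2 = 2" "f y0 = 4" "f y1 = 5" "f y2 = 3"
    unfolding f_def using xs(2-4) yd xy by auto
  have U: "A \<union> B = {x0, x1, x2, y0, y1, y2}" using xs Beq by auto
  have bij: "bij_betw f (A \<union> B) C6"
  proof -
    have "inj_on f {x0, x1, x2, y0, y1, y2}" unfolding inj_on_def using fv by auto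
    moreover have "f ` {x0, x1, x2, y0, y1, y2} = {0..<6}" using fv by auto
    ultimately show ?thesis unfolding bij_betw_def U C6_def by blast
  qed
  have "\<forall>u\<in>A \<union> B. \<forall>v\<in>A \<union> B. le u v \<longleftrightarrow> C6_le (f u) (f v)"
    unfolding U using fv nl yl xl yy yx by (simp add: C6_le_def)
  then show ?thesis unfolding order_iso_def using bij by blast
qed

locale P1 =
  fixes P :: "'a set" and le :: "'a \<Rightarrow> 'a \<Rightarrow> bool" and r :: "'a \<Rightarrow> nat" and n :: nat and s :: "'a \<Rightarrow> 'a"
  assumes fin: "finite P" and po: "poset_on P le" and g: "graded P le r n" and s: "autom P le s"
    and rs: "\<forall>x\<in>P. r (s x) = r x" and mi: "minim P le" and wd: "width_le P le 3" and ne: "P \<noteq> {}"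
begin

lemma rn: "x \<in> P \<Longrightarrow> r x \<le> n" using gradedD(1)[OF g] .

lemma rel_iso:
  assumes k: "k \<le> n" and z: "(k = 0 \<or> compl P le r (k - 1))" and z2: "(k = n \<or> compl P le r k)"
    and u: "u \<in> P" "r u = k" and y: "y \<in> P" "r y \<noteq> k"
  shows "(le u y \<longleftrightarrow> k < r y) \<and> (le y u \<longleftrightarrow> r y < k)"
proof (cases "k < r y")
  case True
  have "k \<noteq> n" using True rn[OF y(1)] by simp
  then have c: "compl P le r k" using z2 by blast
  have "Suc k \<le> r y" using True by simp
  then obtain w where w: "w \<in> P" "r w = Suc k" "le w y" using down_exists[OF po g y(1)] by blast
  have "le u w" using c u w unfolding compl_def by blast
  then have "le u y" using posetD(3)[OF po, of u w y] u w y by blast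
  moreover have "\<not> le y u" using le_rank[OF g y(1) u(1)] True u by auto
  ultimately show ?thesis using True by auto
next
  case False
  then have lt: "r y < k" using y by simp
  then have "k \<noteq> 0" by simp
  then have c: "compl P le r (k - 1)" using z by blast
  have "r y \<le> k - 1" "k - 1 \<le> n" using lt k by linarith+
  then obtain w where w: "w \<in> P" "r w = k - 1" "le y w" using up_exists[OF po g y(1)] by blast
  have "le w u" using c u w lt unfolding compl_def by auto
  then have "le y u" using posetD(3)[OF po, of y w u] u w y by blast
  moreover have "\<not> le u y" using le_rank[OF g u(1) y(1)] lt u by auto
  ultimately show ?thesis using lt by auto
qed

lemma isolated:
  assumes k: "k \<le> n" and c3: "card {p\<in>P. r p = k} = 3"
    and z: "k = 0 \<or> compl P le r (k - 1)" and z2: "k = n \<or> compl P le r k"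
  shows False
proof -
  obtain a b c where abc: "{p\<in>P. r p = k} = {a, b, c}" "a \<noteq> b" "b \<noteq> c" "a \<noteq> c"
    using c3 unfolding card_3_iff by blast
  have aP: "a \<in> P" "r a = k" and bP: "b \<in> P" "r b = k" and cP: "c \<in> P" "r c = k"
    using abc(1) by (auto simp: set_eq_iff)
  have other: "r x \<noteq> k" if "x \<in> P" "x \<noteq> a" "x \<noteq> b" "x \<noteq> c" for x
    using abc(1) that by (auto simp: set_eq_iff)
  note rel = rel_iso[OF k z z2]
  define Q where "Q = P - {c}"
  define f where "f x = (if x = c then a else x)" for x
  have QP: "Q \<subseteq> P" unfolding Q_def by blast
  have ret: "retract_of Q P le" unfolding retract_of_def
  proof (intro conjI exI[of _ f])
    show "Q \<subseteq> P" by (rule QP)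
    show "f ` P \<subseteq> Q" unfolding f_def Q_def using aP abc(4) by auto
    show "\<forall>q\<in>Q. f q = q" unfolding Q_def f_def by simp
    show "\<forall>x\<in>P. \<forall>y\<in>P. le x y \<longrightarrow> le (f x) (f y)"
    proof (intro ballI impI)
      fix x y assume x: "x \<in> P" and y: "y \<in> P" and xy: "le x y"
      show "le (f x) (f y)"
      proof (cases "x = c")
        case xc: True
        show ?thesis
        proof (cases "y = c")
          case True
          then show ?thesis using xc posetD(1)[OF po aP(1)] unfolding f_def by simp
        next
          case False
          have "r y \<noteq> k"
          proof
            assume "r y = k"
            then have "c = y" using level_anti[OF g cP(1) y] cP(2) xy xc by simp
            then show False using False by simp
          qed
          then have "k < r y" using rel[OF cP y] xy xc by blast
          then have "le a y" using rel[OF aP y \<open>r y \<noteq> k\<close>] by blast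
          then show ?thesis using xc False unfolding f_def by simp
        qed
      next
        case xc: False
        show ?thesis
        proof (cases "y = c")
          case True
          have "r x \<noteq> k"
          proof
            assume "r x = k"
            then have "x = c" using level_anti[OF g x cP(1)] cP(2) xy True by simp
            then show False using xc by simp
          qed
          then have "r x < k" using rel[OF cP x] xy True by blast
          then have "le x a" using rel[OF aP x \<open>r x \<noteq> k\<close>] by blast
          then show ?thesis using xc True unfolding f_def by simp
        next
          case False
          then show ?thesis using xc xy unfolding f_def by simp
        qed
      qed
    qed
  qed
  define t where "t x = (if x = a then b else if x = b then a else s x)" for x
  have outQ: "s x \<in> Q \<and> s x \<noteq> a \<and> s x \<noteq> b \<and> r (s x) \<noteq> k" if "x \<in> Q" "x \<noteq> a" "x \<noteq> b" for x
  proof -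
    have xP: "x \<in> P" "x \<noteq> c" using that unfolding Q_def by auto
    have rx: "r x \<noteq> k" using other[OF xP(1) that(2,3) xP(2)] .
    have sx: "s x \<in> P" "r (s x) = r x" using automD(1)[OF s xP(1)] rs xP(1) by auto
    have "s x \<noteq> a" "s x \<noteq> b" "s x \<noteq> c" using sx rx aP bP cP by auto
    then show ?thesis using sx rx unfolding Q_def by auto
  qed
  have aQ: "a \<in> Q" and bQ: "b \<in> Q" using aP bP abc unfolding Q_def by auto
  have tQ: "t ` Q \<subseteq> Q" unfolding t_def using aQ bQ outQ by auto
  have tinj: "inj_on t Q"
  proof (rule inj_onI)
    fix x y assume x: "x \<in> Q" and y: "y \<in> Q" and e: "t x = t y"
    show "x = y"
    proof (cases "x = a \<or> x = b")
      case True
      show ?thesis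
      proof (cases "y = a \<or> y = b")
        case True
        then show ?thesis using \<open>x = a \<or> x = b\<close> e abc(2) unfolding t_def by auto
      next
        case False
        then have "t y \<noteq> a" "t y \<noteq> b" using outQ[OF y] unfolding t_def by auto
        moreover have "t x = a \<or> t x = b" using True unfolding t_def by auto
        ultimately show ?thesis using e by simp
      qed
    next
      case xo: False
      show ?thesis
      proof (cases "y = a \<or> y = b")
        case True
        then have "t x \<noteq> a" "t x \<noteq> b" using outQ[OF x] xo unfolding t_def by auto
        moreover have "t y = a \<or> t y = b" using True unfolding t_def by auto
        ultimately show ?thesis using e by simp
      next
        case False
        then have "s x = s y" using e xo unfolding t_def by simp
        then show ?thesis using automD(4)[OF s] x y QP by blast
      qed
    qed
  qed
  have finQ: "finite Q" using finite_subset[OF QP fin] .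
  have tbij: "bij_betw t Q Q" using endo_inj_surj[OF finQ tQ tinj] tinj unfolding bij_betw_def by blast
  have lab: "\<not> le a b" "\<not> le b a" "le a a" "le b b"
    using level_anti[OF g aP(1) bP(1)] level_anti[OF g bP(1) aP(1)] aP bP abc(2) posetD(1)[OF po] by auto
  have tiso: "le x y \<longleftrightarrow> le (t x) (t y)" if x: "x \<in> Q" and y: "y \<in> Q" for x y
  proof (cases "x = a \<or> x = b")
    case xin: True
    show ?thesis
    proof (cases "y = a \<or> y = b")
      case True
      then show ?thesis using xin lab abc(2) unfolding t_def by auto
    next
      case False
      have yo: "s y \<in> Q" "r (s y) \<noteq> k" "r (s y) = r y" using outQ[OF y] False rs y QP by auto
      have ty: "t y = s y" using False unfolding t_def by simp
      have tx: "t x \<in> P" "r (t x) = k" using xin aP bP unfolding t_def by auto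
      have xP: "x \<in> P" "r x = k" using xin aP bP by auto
      have yP: "y \<in> P" "r y \<noteq> k" using y QP yo by auto
      have "le x y \<longleftrightarrow> k < r y" using rel[OF xP yP] by blast
      moreover have "le (t x) (s y) \<longleftrightarrow> k < r (s y)" using rel[OF tx] yo QP by blast
      ultimately show ?thesis using ty yo by simp
    qed
  next
    case xo: False
    show ?thesis
    proof (cases "y = a \<or> y = b")
      case yin: True
      have xo': "s x \<in> Q" "r (s x) \<noteq> k" "r (s x) = r x" using outQ[OF x] xo rs x QP by auto
      have tx: "t x = s x" using xo unfolding t_def by simp
      have ty: "t y \<in> P" "r (t y) = k" using yin aP bP unfolding t_def by auto
      have yP: "y \<in> P" "r y = k" using yin aP bP by auto
      have xP: "x \<in> P" "r x \<noteq> k" using x QP xo' by auto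
      have "le x y \<longleftrightarrow> r x < k" using rel[OF yP xP] by blast
      moreover have "le (s x) (t y) \<longleftrightarrow> r (s x) < k" using rel[OF ty] xo' QP by blast
      ultimately show ?thesis using tx xo' by simp
    next
      case False
      then have "t x = s x" "t y = s y" using xo unfolding t_def by auto
      then show ?thesis using automD(2)[OF s, of x y] x y QP by auto
    qed
  qed
  have tfp: "t x \<noteq> x" if "x \<in> Q" for x
    using automD(3)[OF s, of x] that QP abc(2) unfolding t_def by auto
  have "autom Q le t" unfolding autom_def using tbij tiso tfp by blast
  moreover have "Q \<noteq> P" using cP unfolding Q_def by blast
  ultimately show False using minimD[OF mi ret] by blast
qed

end

context P1
begin

lemma lev_fin: "finite {p\<in>P. r p = j}" using fin by simp

lemma lev_nonempty:
  assumes j: "j \<le> n" shows "\<exists>q. q \<in> P \<and> r q = j"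
proof -
  obtain p where p: "p \<in> P" using ne by blast
  show ?thesis
  proof (cases "j \<le> r p")
    case True
    then show ?thesis using down_exists[OF po g p True] by blast
  next
    case False
    then have "r p \<le> j" by simp
    then show ?thesis using up_exists[OF po g p _ j] by blast
  qed
qed

lemma lev_card:
  assumes j: "j \<le> n" shows "card {p\<in>P. r p = j} = 2 \<or> card {p\<in>P. r p = j} = 3"
proof -
  let ?L = "{p\<in>P. r p = j}"
  have "antichain_in P le ?L" unfolding antichain_in_def
    using level_anti[OF g] by blast
  then have le3: "card ?L \<le> 3" using wd unfolding width_le_def by blast
  obtain q where q: "q \<in> P" "r q = j" using lev_nonempty[OF j] by blast
  have qL: "q \<in> ?L" using q by simp
  have ne0: "card ?L \<noteq> 0" using qL lev_fin by auto
  have ne1: "card ?L \<noteq> 1"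
  proof
    assume "card ?L = 1"
    then obtain t where t: "?L = {t}" using card_1_singletonE by blast
    have "s q \<in> ?L" using automD(1)[OF s q(1)] rs q by simp
    then have "s q = t" using t by simp
    moreover have "q = t" using qL t by simp
    ultimately have "s q = q" by simp
    then show False using automD(3)[OF s q(1)] by simp
  qed
  show ?thesis using le3 ne0 ne1 by linarith
qed

lemma analysis:
  assumes k: "k < n"
  shows "compl P le r k \<or> crown_lv {p\<in>P. r p = k} {p\<in>P. r p = Suc k} le"
proof -
  let ?A = "{p\<in>P. r p = k}" and ?B = "{p\<in>P. r p = Suc k}"
  have cA: "card ?A = 2 \<or> card ?A = 3" using lev_card k by simp
  have cB: "card ?B = 2 \<or> card ?B = 3" using lev_card k by simp
  have up: "\<exists>b1 b2. b1 \<in> ?B \<and> b2 \<in> ?B \<and> b1 \<noteq> b2 \<and> le x b1 \<and> le x b2" if x: "x \<in> ?A" for x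
  proof -
    have xP: "x \<in> P" "r x < n" using x k by auto
    obtain b1 b2 where "b1 \<in> P" "b2 \<in> P" "b1 \<noteq> b2" "strict le x b1" "strict le x b2" "r b1 = r x + 1" "r b2 = r x + 1"
      using upper2[OF fin po g s rs mi xP] by blast
    then show ?thesis using x by (intro exI[of _ b1] exI[of _ b2]) (auto simp: strict_def)
  qed
  have down: "\<exists>a1 a2. a1 \<in> ?A \<and> a2 \<in> ?A \<and> a1 \<noteq> a2 \<and> le a1 y \<and> le a2 y" if y: "y \<in> ?B" for y
  proof -
    have yP: "y \<in> P" "0 < r y" using y by auto
    obtain a1 a2 where "a1 \<in> P" "a2 \<in> P" "a1 \<noteq> a2" "strict le a1 y" "strict le a2 y" "r a1 + 1 = r y" "r a2 + 1 = r y"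
      using lower2[OF fin po g s rs mi yP] by blast
    then show ?thesis using y by (intro exI[of _ a1] exI[of _ a2]) (auto simp: strict_def)
  qed
  show ?thesis
  proof (cases "card ?B = 2")
    case True
    have "compl P le r k" unfolding compl_def
    proof (intro ballI impI)
      fix x y assume x: "x \<in> P" and y: "y \<in> P" and rx: "r x = k" and ry: "r y = Suc k"
      obtain b1 b2 where b: "b1 \<in> ?B" "b2 \<in> ?B" "b1 \<noteq> b2" "le x b1" "le x b2" using up[of x] x rx by blast
      have "{b1, b2} \<subseteq> ?B" using b by blast
      moreover have "card {b1, b2} = card ?B" using True b(3) by simp
      ultimately have "{b1, b2} = ?B" using card_subset_eq[OF lev_fin] by blast
      then have "y = b1 \<or> y = b2" using y ry by blast
      then show "le x y" using b by blast
    qed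
    then show ?thesis by blast
  next
    case B3: False
    show ?thesis
    proof (cases "card ?A = 2")
      case True
      have "compl P le r k" unfolding compl_def
      proof (intro ballI impI)
        fix x y assume x: "x \<in> P" and y: "y \<in> P" and rx: "r x = k" and ry: "r y = Suc k"
        obtain a1 a2 where a: "a1 \<in> ?A" "a2 \<in> ?A" "a1 \<noteq> a2" "le a1 y" "le a2 y" using down[of y] y ry by blast
        have "{a1, a2} \<subseteq> ?A" using a by blast
        moreover have "card {a1, a2} = card ?A" using True a(3) by simp
        ultimately have "{a1, a2} = ?A" using card_subset_eq[OF lev_fin] by blast
        then have "x = a1 \<or> x = a2" using x rx by blast
        then show "le x y" using a by blast
      qed
      then show ?thesis by blast
    next
      case A3: False
      have cA3: "card ?A = 3" and cB3: "card ?B = 3" using cA cB A3 B3 by auto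
      let ?T = "{x\<in>?A. \<forall>y\<in>?B. le x y}"
      have sA: "\<forall>x\<in>?A. s x \<in> ?A" using automD(1)[OF s] rs by auto
      have sB: "s y \<in> ?B" if "y \<in> ?B" for y using automD(1)[OF s] rs that by auto
      have inv: "\<forall>x\<in>?A. (s x \<in> ?T \<longleftrightarrow> x \<in> ?T)"
      proof
        fix x assume x: "x \<in> ?A"
        have sx: "s x \<in> ?A" using sA x by blast
        show "s x \<in> ?T \<longleftrightarrow> x \<in> ?T"
        proof
          assume sT: "s x \<in> ?T"
          have "le x y" if y: "y \<in> ?B" for y
          proof -
            have "le (s x) (s y)" using sT sB[OF y] by blast
            then show ?thesis using automD(2)[OF s, of x y] x y by auto
          qed
          then show "x \<in> ?T" using x by blast
        next
          assume xT: "x \<in> ?T"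
          have "le (s x) y" if y: "y \<in> ?B" for y
          proof -
            obtain y' where y': "y' \<in> P" "s y' = y" using automD(5)[OF s] y by blast
            have "r y' = Suc k" using rs y' y by auto
            then have "le x y'" using xT y' by blast
            then show ?thesis using automD(2)[OF s, of x y'] x y' by auto
          qed
          then show "s x \<in> ?T" using sx by blast
        qed
      qed
      have fpA: "\<forall>x\<in>?A. s x \<noteq> x" using automD(3)[OF s] by blast
      have "?T = {} \<or> ?T = ?A" using fpf3[OF lev_fin cA3 _ sA inv fpA] by blast
      then show ?thesis
      proof
        assume "?T = ?A"
        then have "compl P le r k" unfolding compl_def by blast
        then show ?thesis by blast
      next
        assume T0: "?T = {}"
        have ux: "\<exists>!y. y \<in> ?B \<and> \<not> le x y" if x: "x \<in> ?A" for x
        proof -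
          obtain y where y: "y \<in> ?B" "\<not> le x y" using T0 x by blast
          have "y' = y" if y': "y' \<in> ?B" "\<not> le x y'" for y'
          proof (rule ccontr)
            assume ne: "y' \<noteq> y"
            obtain b1 b2 where b: "b1 \<in> ?B" "b2 \<in> ?B" "b1 \<noteq> b2" "le x b1" "le x b2" using up[OF x] by blast
            have "b1 \<noteq> y" "b2 \<noteq> y" "b1 \<noteq> y'" "b2 \<noteq> y'" using b y y' by auto
            then show False using four_in_three[OF lev_fin cB3 y(1) y'(1) b(1) b(2)] ne b(3) by auto
          qed
          then show ?thesis using y by blast
        qed
        have uy_uniq: "x' = x" if hy: "y \<in> ?B" "x \<in> ?A" "\<not> le x y" "x' \<in> ?A" "\<not> le x' y" for x x' y
        proof (rule ccontr)
          assume ne: "x' \<noteq> x"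
          obtain a1 a2 where a: "a1 \<in> ?A" "a2 \<in> ?A" "a1 \<noteq> a2" "le a1 y" "le a2 y" using down[OF hy(1)] by blast
          have "a1 \<noteq> x" "a2 \<noteq> x" "a1 \<noteq> x'" "a2 \<noteq> x'" using a hy by auto
          then show False using four_in_three[OF lev_fin cA3 hy(2) hy(4) a(1) a(2)] ne a(3) by auto
        qed
        define m where "m x = (THE y. y \<in> ?B \<and> \<not> le x y)" for x
        have mp: "m x \<in> ?B \<and> \<not> le x (m x)" if "x \<in> ?A" for x
          unfolding m_def by (rule theI'[OF ux[OF that]])
        have minj: "inj_on m ?A"
        proof (rule inj_onI)
          fix x x' assume x: "x \<in> ?A" and x': "x' \<in> ?A" and e: "m x = m x'"
          have "m x \<in> ?B" "\<not> le x (m x)" "\<not> le x' (m x)" using mp[OF x] mp[OF x'] e by auto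
          then show "x = x'" using uy_uniq[of "m x" x' x] x x' by blast
        qed
        have msub: "m ` ?A \<subseteq> ?B" using mp by blast
        have "card (m ` ?A) = card ?B" using card_image[OF minj] cA3 cB3 by linarith
        then have mim: "m ` ?A = ?B" by (rule card_subset_eq[OF lev_fin msub])
        have uy: "\<exists>!x. x \<in> ?A \<and> \<not> le x y" if y: "y \<in> ?B" for y
        proof -
          have "y \<in> m ` ?A" by (subst mim) (rule y)
          then obtain x where x': "y = m x" "x \<in> ?A" by (rule imageE)
          then have x: "x \<in> ?A" "m x = y" by auto
          have "\<not> le x y" using mp[OF x(1)] x(2) by simp
          then show ?thesis using x(1) uy_uniq[OF y] by blast
        qed
        have "crown_lv ?A ?B le" unfolding crown_lv_def using cA3 cB3 ux uy by blast
        then show ?thesis by blast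
      qed
    qed
  qed
qed

end

primrec segs :: "(nat \<Rightarrow> bool) \<Rightarrow> nat \<Rightarrow> nat \<Rightarrow> nat \<Rightarrow> (nat \<times> nat) list" where
  "segs c n s 0 = []"
| "segs c n s (Suc f) = (if n < s then [] else
     (s, LEAST t. s \<le> t \<and> (t = n \<or> c t)) # segs c n (Suc (LEAST t. s \<le> t \<and> (t = n \<or> c t))) f)"

lemma least_props:
  fixes s n :: nat and c :: "nat \<Rightarrow> bool"
  assumes "s \<le> n"
  defines "t \<equiv> LEAST t. s \<le> t \<and> (t = n \<or> c t)"
  shows "s \<le> t" "t \<le> n" "t = n \<or> c t" "\<And>k. s \<le> k \<Longrightarrow> k < t \<Longrightarrow> \<not> c k"
proof -
  have P: "s \<le> n \<and> (n = n \<or> c n)" using assms(1) by simp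
  have "s \<le> t \<and> (t = n \<or> c t)" unfolding t_def by (rule LeastI[where P="\<lambda>t. s \<le> t \<and> (t = n \<or> c t)", OF P])
  then show "s \<le> t" "t = n \<or> c t" by auto
  show "t \<le> n" unfolding t_def by (rule Least_le[where P="\<lambda>t. s \<le> t \<and> (t = n \<or> c t)", OF P])
  fix k assume k: "s \<le> k" "k < t"
  have "\<not> (s \<le> k \<and> (k = n \<or> c k))" using not_less_Least[of k "\<lambda>t. s \<le> t \<and> (t = n \<or> c t)"] k(2) unfolding t_def by blast
  then show "\<not> c k" using k(1) by blast
qed

lemma segs_p1:
  "\<forall>ab\<in>set (segs c n s f). s \<le> fst ab \<and> fst ab \<le> snd ab \<and> snd ab \<le> n \<and>
     (\<forall>k. fst ab \<le> k \<and> k < snd ab \<longrightarrow> \<not> c k) \<and> (snd ab = n \<or> c (snd ab)) \<and>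
     (fst ab = s \<or> (0 < fst ab \<and> c (fst ab - 1)))"
proof (induction f arbitrary: s)
  case 0
  then show ?case by simp
next
  case (Suc f)
  show ?case
  proof (cases "n < s")
    case True
    then show ?thesis by simp
  next
    case False
    then have sn: "s \<le> n" by simp
    define t where "t = (LEAST t. s \<le> t \<and> (t = n \<or> c t))"
    note lp = least_props[OF sn, where c=c, folded t_def]
    have eq: "segs c n s (Suc f) = (s, t) # segs c n (Suc t) f" using False unfolding t_def by simp
    show ?thesis unfolding eq
    proof
      fix ab assume ab: "ab \<in> set ((s, t) # segs c n (Suc t) f)"
      show "s \<le> fst ab \<and> fst ab \<le> snd ab \<and> snd ab \<le> n \<and>
         (\<forall>k. fst ab \<le> k \<and> k < snd ab \<longrightarrow> \<not> c k) \<and> (snd ab = n \<or> c (snd ab)) \<and>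
         (fst ab = s \<or> (0 < fst ab \<and> c (fst ab - 1)))"
      proof (cases "ab = (s, t)")
        case True
        then show ?thesis using lp by auto
      next
        case False
        then have abt: "ab \<in> set (segs c n (Suc t) f)" using ab by simp
        have ih: "Suc t \<le> fst ab \<and> fst ab \<le> snd ab \<and> snd ab \<le> n \<and>
          (\<forall>k. fst ab \<le> k \<and> k < snd ab \<longrightarrow> \<not> c k) \<and> (snd ab = n \<or> c (snd ab)) \<and>
          (fst ab = Suc t \<or> (0 < fst ab \<and> c (fst ab - 1)))" using Suc.IH abt by blast
        have "t \<noteq> n" using ih by linarith
        then have ct: "c t" using lp(3) by blast
        have "fst ab = Suc t \<or> (0 < fst ab \<and> c (fst ab - 1))" using ih by blast
        then have "0 < fst ab \<and> c (fst ab - 1)" using ct by auto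
        then show ?thesis using ih lp(1) by auto
      qed
    qed
  qed
qed

lemma segs_p2:
  "n + 1 \<le> f + s \<Longrightarrow> s \<le> k \<Longrightarrow> k \<le> n \<Longrightarrow> \<exists>ab\<in>set (segs c n s f). fst ab \<le> k \<and> k \<le> snd ab"
proof (induction f arbitrary: s)
  case 0
  then show ?case by simp
next
  case (Suc f)
  then have sn: "s \<le> n" by simp
  define t where "t = (LEAST t. s \<le> t \<and> (t = n \<or> c t))"
  note lp = least_props[OF sn, where c=c, folded t_def]
  have eq: "segs c n s (Suc f) = (s, t) # segs c n (Suc t) f" using sn unfolding t_def by simp
  show ?case
  proof (cases "k \<le> t")
    case True
    then show ?thesis unfolding eq using Suc.prems by auto
  next
    case False
    have "\<exists>ab\<in>set (segs c n (Suc t) f). fst ab \<le> k \<and> k \<le> snd ab"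
      using Suc.IH[of "Suc t"] Suc.prems lp(1) False by simp
    then show ?thesis unfolding eq by auto
  qed
qed

lemma segs_p3:
  "i < j \<Longrightarrow> j < length (segs c n s f) \<Longrightarrow> snd (segs c n s f ! i) < fst (segs c n s f ! j)"
proof (induction f arbitrary: s i j)
  case 0
  then show ?case by simp
next
  case (Suc f)
  then have sn: "s \<le> n" by (cases "n < s") auto
  define t where "t = (LEAST t. s \<le> t \<and> (t = n \<or> c t))"
  have eq: "segs c n s (Suc f) = (s, t) # segs c n (Suc t) f" using sn unfolding t_def by simp
  show ?case
  proof (cases i)
    case 0
    obtain j' where j: "j = Suc j'" using Suc.prems 0 by (cases j) auto
    have "j' < length (segs c n (Suc t) f)" using Suc.prems eq j by simp
    then have "segs c n (Suc t) f ! j' \<in> set (segs c n (Suc t) f)" by simp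
    then have "Suc t \<le> fst (segs c n (Suc t) f ! j')" using segs_p1[of c n "Suc t" f] by blast
    then show ?thesis unfolding eq using 0 j by simp
  next
    case (Suc i')
    obtain j' where j: "j = Suc j'" using Suc.prems \<open>i = Suc i'\<close> by (cases j) auto
    have "i' < j'" "j' < length (segs c n (Suc t) f)" using Suc.prems eq j \<open>i = Suc i'\<close> by auto
    then have "snd (segs c n (Suc t) f ! i') < fst (segs c n (Suc t) f ! j')" using Suc.IH by blast
    then show ?thesis unfolding eq using \<open>i = Suc i'\<close> j by simp
  qed
qed

lemma segs_p4: "s \<le> n \<Longrightarrow> segs c n s (Suc f) \<noteq> []"
  by simp

context P1
begin

lemma block_stack:
  assumes rk: "\<forall>p\<in>P. rank_in P le p = r p" and ab: "a < b" "b \<le> n"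
    and nc: "\<forall>k. a \<le> k \<and> k < b \<longrightarrow> \<not> compl P le r k"
  shows "six_stack (levels P le a b) le"
proof -
  define B where "B = {p\<in>P. a \<le> r p \<and> r p \<le> b}"
  have lv: "levels P le a b = B" unfolding levels_def B_def using rk by auto
  define r' where "r' p = r p - a" for p
  have BP: "B \<subseteq> P" unfolding B_def by blast
  have finB: "finite B" using finite_subset[OF BP fin] .
  have poB: "poset_on B le" using poset_sub[OF po BP] .
  have Bm: "p \<in> B \<longleftrightarrow> p \<in> P \<and> a \<le> r p \<and> r p \<le> b" for p unfolding B_def by simp
  have mono: "monoR B le r'" unfolding monoR_def
  proof (intro ballI impI)
    fix x y assume x: "x \<in> B" and y: "y \<in> B" and xy: "strict le x y"
    have "r x < r y" using gradedD(2)[OF g _ _ xy] x y Bm by blast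
    then show "r' x < r' y" unfolding r'_def using x Bm by auto
  qed
  have down: "downR B le r'" unfolding downR_def
  proof (intro ballI impI)
    fix p assume p: "p \<in> B" "0 < r' p"
    have pP: "p \<in> P" "0 < r p" using p Bm unfolding r'_def by auto
    obtain q where q: "q \<in> P" "strict le q p" "r q + 1 = r p" using gradedD(3)[OF g pP] by blast
    have "a \<le> r q" using p q Bm unfolding r'_def by auto
    then have "q \<in> B" using q p Bm by auto
    moreover have "r' q + 1 = r' p" using q \<open>a \<le> r q\<close> unfolding r'_def by auto
    ultimately show "\<exists>q\<in>B. strict le q p \<and> r' q + 1 = r' p" using q by blast
  qed
  have gB: "graded B le r' (b - a)" unfolding graded_def
  proof (intro conjI)
    show "\<forall>p\<in>B. r' p \<le> b - a" unfolding r'_def using Bm by auto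
    show "monoR B le r'" by (rule mono)
    show "downR B le r'" by (rule down)
    show "\<forall>p\<in>B. r' p < b - a \<longrightarrow> (\<exists>q\<in>B. strict le p q \<and> r' q = r' p + 1)"
    proof (intro ballI impI)
      fix p assume p: "p \<in> B" "r' p < b - a"
      have pP: "p \<in> P" "r p < n" using p Bm ab unfolding r'_def by auto
      obtain q where q: "q \<in> P" "strict le p q" "r q = r p + 1" using gradedD(4)[OF g pP] by blast
      have "q \<in> B" using q p Bm unfolding r'_def by auto
      moreover have "r' q = r' p + 1" using q p Bm unfolding r'_def by auto
      ultimately show "\<exists>q\<in>B. strict le p q \<and> r' q = r' p + 1" using q by blast
    qed
    show "\<forall>x\<in>B. \<forall>y\<in>B. strict le x y \<and> r' x + 1 < r' y \<longrightarrow> (\<exists>z\<in>B. strict le x z \<and> strict le z y)"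
    proof (intro ballI impI)
      fix x y assume x: "x \<in> B" and y: "y \<in> B" and xy: "strict le x y \<and> r' x + 1 < r' y"
      have xP: "x \<in> P" and yP: "y \<in> P" using x y BP by auto
      have "r x + 1 < r y" using xy x y Bm unfolding r'_def by auto
      then obtain z where z: "z \<in> P" "strict le x z" "strict le z y" using gradedD(5)[OF g xP yP] xy by blast
      have "r x < r z" "r z < r y" using gradedD(2)[OF g xP z(1) z(2)] gradedD(2)[OF g z(1) yP z(3)] by auto
      then have "z \<in> B" using z x y Bm by auto
      then show "\<exists>z\<in>B. strict le x z \<and> strict le z y" using z by blast
    qed
  qed
  have neB: "B \<noteq> {}"
  proof -
    have "a \<le> n" using ab by simp
    then have "\<exists>q. q \<in> P \<and> r q = a" by (rule lev_nonempty)
    then obtain q where q: "q \<in> P" "r q = a" by blast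
    have "q \<in> B" unfolding B_def using q ab by simp
    then show ?thesis by blast
  qed
  have rkB: "ranked_of_rank B le (b - a)" using G2[OF finB poB neB gB] .
  have rB: "rank_in B le p = r p - a" if "p \<in> B" for p
    using rank_char[OF finB poB mono down that] unfolding r'_def .
  have iso: "order_iso (levels B le i (i + 1)) le C6 C6_le" if i: "i < b - a" for i
  proof -
    let ?k = "a + i"
    let ?A = "{p\<in>P. r p = ?k}" and ?C = "{p\<in>P. r p = Suc ?k}"
    have eq: "levels B le i (i + 1) = ?A \<union> ?C"
    proof
      show "levels B le i (i + 1) \<subseteq> ?A \<union> ?C"
      proof
        fix p assume "p \<in> levels B le i (i + 1)"
        then have "p \<in> B" "i \<le> rank_in B le p" "rank_in B le p \<le> i + 1" unfolding levels_def by auto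
        then show "p \<in> ?A \<union> ?C" using rB Bm by fastforce
      qed
      show "?A \<union> ?C \<subseteq> levels B le i (i + 1)"
      proof
        fix p assume p: "p \<in> ?A \<union> ?C"
        then have "p \<in> P" "r p = a + i \<or> r p = Suc (a + i)" by auto
        then have pB: "p \<in> B" unfolding B_def using i by auto
        then show "p \<in> levels B le i (i + 1)" unfolding levels_def using rB[OF pB] p by auto
      qed
    qed
    have kn: "?k < n" using i ab by simp
    have "a \<le> ?k \<and> ?k < b" using i by linarith
    then have "\<not> compl P le r ?k" using nc by blast
    then have cr: "crown_lv ?A ?C le" using analysis[OF kn] by blast
    have antiA: "\<forall>x\<in>?A. \<forall>y\<in>?A. le x y \<longleftrightarrow> x = y"
      using level_anti[OF g] posetD(1)[OF po] by auto
    have antiC: "\<forall>x\<in>?C. \<forall>y\<in>?C. le x y \<longleftrightarrow> x = y"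
      using level_anti[OF g] posetD(1)[OF po] by auto
    have noBA: "\<forall>x\<in>?A. \<forall>y\<in>?C. \<not> le y x"
    proof (intro ballI)
      fix x y assume x: "x \<in> ?A" and y: "y \<in> ?C"
      show "\<not> le y x"
      proof
        assume "le y x"
        then have "r y \<le> r x" using le_rank[OF g] x y by blast
        then show False using x y by simp
      qed
    qed
    show ?thesis unfolding eq using crown_iso[OF cr antiA antiC noBA] .
  qed
  have "six_stack B le" unfolding six_stack_def
    using ab rkB iso by (intro exI[of _ "b - a"]) auto
  then show ?thesis unfolding lv .
qed

lemma tower:
  assumes rk: "\<forall>p\<in>P. rank_in P le p = r p"
  shows "six_tower P le"
proof -
  define S where "S = segs (compl P le r) n 0 (Suc n)"
  define Bs where "Bs = map (\<lambda>ab. levels P le (fst ab) (snd ab)) S"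
  have lv: "levels P le a b = {p\<in>P. a \<le> r p \<and> r p \<le> b}" for a b unfolding levels_def using rk by auto
  have p1: "\<forall>ab\<in>set S. 0 \<le> fst ab \<and> fst ab \<le> snd ab \<and> snd ab \<le> n \<and>
     (\<forall>k. fst ab \<le> k \<and> k < snd ab \<longrightarrow> \<not> compl P le r k) \<and> (snd ab = n \<or> compl P le r (snd ab)) \<and>
     (fst ab = 0 \<or> (0 < fst ab \<and> compl P le r (fst ab - 1)))" unfolding S_def by (rule segs_p1)
  have lenB: "length Bs = length S" unfolding Bs_def by simp
  have Bsi: "Bs ! i = levels P le (fst (S ! i)) (snd (S ! i))" if "i < length S" for i
    unfolding Bs_def using that by simp
  have ord: "\<forall>x\<in>Bs ! i. \<forall>y\<in>Bs ! j. strict le x y" if ij: "i < j" "j < length Bs" for i j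
  proof (intro ballI)
    fix x y assume x: "x \<in> Bs ! i" and y: "y \<in> Bs ! j"
    have il: "i < length S" and jl: "j < length S" using ij lenB by auto
    have Si: "S ! i \<in> set S" and Sj: "S ! j \<in> set S" using il jl by auto
    have lt: "snd (S ! i) < fst (S ! j)" unfolding S_def using segs_p3 ij lenB unfolding S_def by (metis S_def)
    have "fst (S ! j) \<le> n" using p1 Sj by auto
    then have "snd (S ! i) \<noteq> n" using lt by simp
    then have c: "compl P le r (snd (S ! i))" using p1 Si by blast
    have xP: "x \<in> P" "r x \<le> snd (S ! i)" using x Bsi[OF il] lv by auto
    have yP: "y \<in> P" "fst (S ! j) \<le> r y" using y Bsi[OF jl] lv by auto
    show "strict le x y" using comp_lt[OF po g c xP(1) yP(1) xP(2)] lt yP(2) by simp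
  qed
  have ne: "Bs \<noteq> []" unfolding Bs_def S_def using segs_p4[of 0 n] by simp
  have un: "\<Union>(set Bs) = P"
  proof
    show "\<Union>(set Bs) \<subseteq> P" unfolding Bs_def levels_def by auto
    show "P \<subseteq> \<Union>(set Bs)"
    proof
      fix p assume p: "p \<in> P"
      have "\<exists>ab\<in>set (segs (compl P le r) n 0 (Suc n)). fst ab \<le> r p \<and> r p \<le> snd ab"
        by (rule segs_p2) (use rn[OF p] in auto)
      then obtain ab where ab: "ab \<in> set S" "fst ab \<le> r p" "r p \<le> snd ab"
        unfolding S_def by blast
      have "p \<in> levels P le (fst ab) (snd ab)" using lv p ab by auto
      moreover have "levels P le (fst ab) (snd ab) \<in> set Bs" unfolding Bs_def using ab(1) by auto
      ultimately show "p \<in> \<Union>(set Bs)" by blast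
    qed
  qed
  have disj: "\<forall>i<length Bs. \<forall>j<length Bs. i \<noteq> j \<longrightarrow> Bs ! i \<inter> Bs ! j = {}"
  proof (intro allI impI)
    fix i j assume i: "i < length Bs" and j: "j < length Bs" and ij: "i \<noteq> j"
    show "Bs ! i \<inter> Bs ! j = {}"
    proof (rule ccontr)
      assume "Bs ! i \<inter> Bs ! j \<noteq> {}"
      then obtain x where "x \<in> Bs ! i" "x \<in> Bs ! j" by blast
      then have "strict le x x" using ord i j ij by (metis linorder_neqE_nat)
      then show False unfolding strict_def by simp
    qed
  qed
  have blocks: "two_antichain (Bs ! i) le \<or> six_stack (Bs ! i) le" if i: "i < length Bs" for i
  proof -
    have il: "i < length S" using i lenB by simp
    define a where "a = fst (S ! i)"
    define b where "b = snd (S ! i)"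
    have Si: "S ! i \<in> set S" using il by simp
    have pa: "a \<le> b" "b \<le> n" "\<forall>k. a \<le> k \<and> k < b \<longrightarrow> \<not> compl P le r k" "b = n \<or> compl P le r b"
      "a = 0 \<or> compl P le r (a - 1)" using p1 Si unfolding a_def b_def by auto
    have Bi: "Bs ! i = levels P le a b" using Bsi[OF il] unfolding a_def b_def .
    show ?thesis
    proof (cases "a = b")
      case True
      have eqL: "Bs ! i = {p\<in>P. r p = a}" using Bi lv True by auto
      have "card {p\<in>P. r p = a} \<noteq> 3"
      proof
        assume "card {p\<in>P. r p = a} = 3"
        then show False using isolated[of a] pa True by simp
      qed
      then have c2: "card {p\<in>P. r p = a} = 2" using lev_card[of a] pa True by simp
      have "antichain_in {p\<in>P. r p = a} le {p\<in>P. r p = a}" unfolding antichain_in_def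
        using level_anti[OF g] by blast
      then have "two_antichain (Bs ! i) le" unfolding two_antichain_def eqL using c2 by simp
      then show ?thesis by blast
    next
      case False
      then have "a < b" using pa by simp
      then have "six_stack (Bs ! i) le" unfolding Bi using block_stack[OF rk _ pa(2) pa(3)] by blast
      then show ?thesis by blast
    qed
  qed
  show ?thesis unfolding six_tower_def
    using ne un disj blocks ord by blast
qed

end

theorem corollary3p6:
  fixes P :: "'a set" and le :: "'a \<Rightarrow> 'a \<Rightarrow> bool"
  assumes "finite P" and "P \<noteq> {}" and "poset_on P le"
    and "ranked P le" and "width_le P le 3"
  shows "(minimal_automorphic P le \<longrightarrow> six_tower P le) \<and>
         (\<forall>(Q :: 'b set) leQ. finite Q \<and> poset_on Q leQ \<and> six_tower Q leQ
              \<longrightarrow> automorphic Q leQ)"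
proof (intro conjI impI allI)
  fix Q :: "'b set" and leQ
  assume "finite Q \<and> poset_on Q leQ \<and> six_tower Q leQ"
  then show "automorphic Q leQ" using tower_auto by blast
next
  assume ma: "minimal_automorphic P le"
  obtain n where rk: "ranked_of_rank P le n" using assms(4) unfolding ranked_def by blast
  have g: "graded P le (rank_in P le) n" using G1[OF assms(1) assms(3) rk] .
  obtain s where s: "autom P le s" using ma unfolding minimal_automorphic_def automorphic_def autom_def by blast
  have rs: "\<forall>x\<in>P. rank_in P le (s x) = rank_in P le x"
    using autom_rank[OF assms(1) assms(3) g s] by blast
  have mi: "minim P le" using ma unfolding minimal_automorphic_def minim_def by blast
  interpret P1 P le "rank_in P le" n s
    by unfold_locales (use assms g s rs mi in auto)
  show "six_tower P le" using tower by simp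
qed

end
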